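(* Let $k$ be a field, $(C,\Delta)$ a coassociative coalgebra, $(L,\phi)$ a Lie algebra and $B$ a Lie module over $L$ via $\psi$. For every $n\ge0$ and $f\in Alt^n(L,B)$ with induced map $F$, one has $\delta(\delta F)=0$, where $\delta F$ is regarded as the map induced by $df$ and $\delta$ is applied again by the same formula (with $df$ in place of $f$). Thus $(TDalt^\bullet(Hom(C,L),Hom(C,B)),\delta)$ is a cochain complex.
   Context: Iterated coproduct $\Delta^{(m-1)}:C\to C^{\otimes m}$, written $\sum c_{(1)}\otimes\dots\otimes c_{(m)}$. $S_m$ acts on $m$-fold tensor products by $\sigma(x_1\otimes\dots\otimes x_m)=x_{\sigma(1)}\otimes\dots\otimes x_{\sigma(m)}$. For $\chi:X_1\otimes\dots\otimes X_m\to Y$ the induced map is $f_1\otimes\dots\otimes f_m\mapsto\chi\circ(f_1\otimes\dots\otimes f_m)\circ\Delta^{(m-1)}$. $Alt^n(L,B)$: skew symmetric linear maps $L^{\otimes n}\to B$, $Alt^0(L,B)=B$; $df(x_1,\dots,x_{n+1})=\sum_{i}(-1)^{i+1}\psi(x_i,f(x_1,\dots,\hat{x_i},\dots,x_{n+1}))+\sum_{j<k}(-1)^{j+k}f(\phi(x_j,x_k),x_1,\dots,\hat{x_j},\dots,\hat{x_k},\dots,x_{n+1})$. $TDalt^n$: TD skew maps $Hom(C,L)^{\otimes n}\to Hom(C,B)$, where $G$ induced by $\chi$ is TD skew if $G\circ\sigma=(-1)^\sigma G^{\sigma^{-1}}$ with $G^\sigma(f_1\otimes\dots\otimes f_m)=\chi\circ(f_1\otimes\dots\otimes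 f_m)\circ\sigma\circ\Delta^{(m-1)}$. With $\Phi,\Psi,F$ induced by $\phi,\psi,f$: $(\Psi\circ(1\otimes F))^{\sigma}(g_1\otimes\dots\otimes g_{n+1})(c)=\sum\psi(g_1(c_{(\sigma(1))}),f(g_2(c_{(\sigma(2))})\otimes\dots\otimes g_{n+1}(c_{(\sigma(n+1))})))$, $(F\circ(\Phi\otimes1))^{\sigma}(g_1\otimes\dots\otimes g_{n+1})(c)=\sum f(\phi(g_1(c_{(\sigma(1))}),g_2(c_{(\sigma(2))}))\otimes g_3(c_{(\sigma(3))})\otimes\dots\otimes g_{n+1}(c_{(\sigma(n+1))}))$, and $\delta F=\sum_{\sigma}(-1)^{\sigma}(\Psi\circ(1\otimes F))^{\sigma}\circ\sigma-\sum_{\sigma'}(-1)^{\sigma'}(F\circ(\Phi\otimes1))^{\sigma'}\circ\sigma'$, $\sigma$ over $(1,n)$-unshuffles and $\sigma'$ over $(2,n-1)$-unshuffles ($\sigma\in S_{p+q}$ with $\sigma(1)<\dots<\sigma(p)$, $\sigma(p+1)<\dots<\sigma(p+q)$), $\sigma$ acting on $Hom(C,L)^{\otimes(n+1)}$ by permuting factors; for $n=0$, $(\delta F)(g)(c)=\psi(g(c),f)$. *)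

theory Defs
  imports Main "HOL.Vector_Spaces" "HOL-Combinatorics.Permutations"
begin

text \<open>Lists are 0-indexed. A (multi)linear map on an n-fold tensor
  product is represented by the corresponding multilinear map on lists of length n.
  An element of C tensor C is represented by a finite list of pairs (a,b) meaning
  the sum of a tensor b; equality of tensors is tested against all k-valued bilinear
  (trilinear) forms, which characterises equality in tensor products of vector spaces.\<close>

definition multilinear_on ::
  "('k::field \<Rightarrow> 'v::ab_group_add \<Rightarrow> 'v) \<Rightarrow> ('k \<Rightarrow> 'w::ab_group_add \<Rightarrow> 'w) \<Rightarrow> nat \<Rightarrow> ('v list \<Rightarrow> 'w) \<Rightarrow> bool"
  where "multilinear_on sV sW n f \<longleftrightarrow>
     (\<forall>xs i. length xs = n \<longrightarrow> i < n \<longrightarrow> Vector_Spaces.linear sV sW (\<lambda>v. f (xs[i := v])))"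

definition bilinear_map ::
  "('k::field \<Rightarrow> 'u::ab_group_add \<Rightarrow> 'u) \<Rightarrow> ('k \<Rightarrow> 'v::ab_group_add \<Rightarrow> 'v) \<Rightarrow> ('k \<Rightarrow> 'w::ab_group_add \<Rightarrow> 'w)
    \<Rightarrow> ('u \<Rightarrow> 'v \<Rightarrow> 'w) \<Rightarrow> bool"
  where "bilinear_map sU sV sW h \<longleftrightarrow>
     (\<forall>a. Vector_Spaces.linear sV sW (h a)) \<and> (\<forall>b. Vector_Spaces.linear sU sW (\<lambda>a. h a b))"

definition trilinear_form ::
  "('k::field \<Rightarrow> 'c::ab_group_add \<Rightarrow> 'c) \<Rightarrow> ('c \<Rightarrow> 'c \<Rightarrow> 'c \<Rightarrow> 'k) \<Rightarrow> bool"
  where "trilinear_form sC h \<longleftrightarrow>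
     (\<forall>a b. Vector_Spaces.linear sC (*) (h a b)) \<and> (\<forall>a c. Vector_Spaces.linear sC (*) (\<lambda>b. h a b c))
     \<and> (\<forall>b c. Vector_Spaces.linear sC (*) (\<lambda>a. h a b c))"

definition teval2 :: "('c \<Rightarrow> 'c \<Rightarrow> 'y::comm_monoid_add) \<Rightarrow> ('c \<times> 'c) list \<Rightarrow> 'y"
  where "teval2 h T = sum_list (map (\<lambda>(a, b). h a b) T)"

definition coassoc_coalgebra ::
  "('k::field \<Rightarrow> 'c::ab_group_add \<Rightarrow> 'c) \<Rightarrow> ('c \<Rightarrow> ('c \<times> 'c) list) \<Rightarrow> bool"
  where "coassoc_coalgebra sC Delta \<longleftrightarrow>
     vector_space sC \<and>
     (\<forall>h. bilinear_map sC sC (*) h \<longrightarrow>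
        (\<forall>s x y. teval2 h (Delta (sC s x + y)) = s * teval2 h (Delta x) + teval2 h (Delta y))) \<and>
     (\<forall>h. trilinear_form sC h \<longrightarrow>
        (\<forall>c. teval2 (\<lambda>a b. teval2 (\<lambda>a1 a2. h a1 a2 b) (Delta a)) (Delta c)
            = teval2 (\<lambda>a b. teval2 (\<lambda>b1 b2. h a b1 b2) (Delta b)) (Delta c)))"

text \<open>Iterated coproduct Delta^(m) : C \<rightarrow> C^(m+1), as a list of (m+1)-tuples (lists),
  Delta^(0) = id, Delta^(m+1) = (Delta \<otimes> 1^(m)) \<circ> Delta^(m).\<close>
fun iter_cop :: "('c \<Rightarrow> ('c \<times> 'c) list) \<Rightarrow> nat \<Rightarrow> 'c \<Rightarrow> 'c list list" where
  "iter_cop Delta 0 c = [[c]]"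
| "iter_cop Delta (Suc m) c =
     concat (map (\<lambda>t. map (\<lambda>(a, b). a # b # tl t) (Delta (hd t))) (iter_cop Delta m c))"

definition lie_algebra :: "('k::field \<Rightarrow> 'l::ab_group_add \<Rightarrow> 'l) \<Rightarrow> ('l \<Rightarrow> 'l \<Rightarrow> 'l) \<Rightarrow> bool"
  where "lie_algebra sL phi \<longleftrightarrow> vector_space sL \<and> bilinear_map sL sL sL phi \<and>
     (\<forall>x. phi x x = 0) \<and>
     (\<forall>x y z. phi x (phi y z) + phi y (phi z x) + phi z (phi x y) = 0)"

definition lie_module ::
  "('k::field \<Rightarrow> 'l::ab_group_add \<Rightarrow> 'l) \<Rightarrow> ('l \<Rightarrow> 'l \<Rightarrow> 'l) \<Rightarrow> ('k \<Rightarrow> 'b::ab_group_add \<Rightarrow> 'b)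
     \<Rightarrow> ('l \<Rightarrow> 'b \<Rightarrow> 'b) \<Rightarrow> bool"
  where "lie_module sL phi sB psi \<longleftrightarrow> vector_space sB \<and> bilinear_map sL sB sB psi \<and>
     (\<forall>x y b. psi (phi x y) b = psi x (psi y b) - psi y (psi x b))"

text \<open>Alt^n(L,B): skew symmetric (multi)linear maps L^(\<otimes>n) \<rightarrow> B; Alt^0(L,B) = B
  (represented by the value on the empty list).\<close>
definition Alt ::
  "('k::field \<Rightarrow> 'l::ab_group_add \<Rightarrow> 'l) \<Rightarrow> ('k \<Rightarrow> 'b::ab_group_add \<Rightarrow> 'b) \<Rightarrow> nat \<Rightarrow> ('l list \<Rightarrow> 'b) set"
  where "Alt sL sB n = {f. multilinear_on sL sB n f \<and>
     (\<forall>xs \<sigma>. length xs = n \<longrightarrow> \<sigma> permutes {..<n} \<longrightarrow>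
        f (permute_list \<sigma> xs) = sB (of_int (sign \<sigma>)) (f xs))}"

text \<open>Chevalley--Eilenberg differential d : Alt^n \<rightarrow> Alt^(n+1) (0-indexed version).\<close>
definition CE_d ::
  "('k::field \<Rightarrow> 'b::ab_group_add \<Rightarrow> 'b) \<Rightarrow> ('l \<Rightarrow> 'l \<Rightarrow> 'l) \<Rightarrow> ('l \<Rightarrow> 'b \<Rightarrow> 'b)
     \<Rightarrow> nat \<Rightarrow> ('l list \<Rightarrow> 'b) \<Rightarrow> 'l list \<Rightarrow> 'b"
  where "CE_d sB phi psi n f xs =
     (\<Sum>i<n+1. sB ((-1) ^ i) (psi (xs ! i) (f (nths xs (- {i})))))
   + (\<Sum>(j, k)\<in>{(j, k). j < k \<and> k < n+1}.
        sB ((-1) ^ (j + k)) (f (phi (xs ! j) (xs ! k) # nths xs (- {j, k}))))"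

definition unshuffles :: "nat \<Rightarrow> nat \<Rightarrow> (nat \<Rightarrow> nat) set"
  where "unshuffles p q = {\<sigma>. \<sigma> permutes {..<p+q} \<and>
     strict_mono_on {..<p} \<sigma> \<and> strict_mono_on {p..<p+q} \<sigma>}"

text \<open>Action of a permutation on Hom(C,L)^(\<otimes>m) on pure tensors:
  sigma(g_1 \<otimes> ... \<otimes> g_m) = g_sigma(1) \<otimes> ... \<otimes> g_sigma(m).\<close>
definition act :: "(nat \<Rightarrow> nat) \<Rightarrow> 'a list \<Rightarrow> 'a list"
  where "act \<sigma> gs = permute_list \<sigma> gs"

text \<open>(Psi \<circ> (1 \<otimes> F))^sigma on pure tensors g_1 \<otimes> ... \<otimes> g_m (m = n+1).\<close>
definition PsiF_sup ::
  "('c \<Rightarrow> ('c \<times> 'c) list) \<Rightarrow> ('l \<Rightarrow> 'b \<Rightarrow> 'b) \<Rightarrow> ('l list \<Rightarrow> 'b) \<Rightarrow> nat \<Rightarrow> (nat \<Rightarrow> nat)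
     \<Rightarrow> ('c \<Rightarrow> 'l) list \<Rightarrow> 'c \<Rightarrow> 'b::comm_monoid_add"
  where "PsiF_sup Delta psi f m \<sigma> gs c =
     sum_list (map (\<lambda>t. psi ((gs ! 0) (t ! \<sigma> 0)) (f (map (\<lambda>i. (gs ! i) (t ! \<sigma> i)) [1..<m])))
       (iter_cop Delta (m - 1) c))"

text \<open>(F \<circ> (Phi \<otimes> 1))^sigma on pure tensors g_1 \<otimes> ... \<otimes> g_m (m = n+1).\<close>
definition FPhi_sup ::
  "('c \<Rightarrow> ('c \<times> 'c) list) \<Rightarrow> ('l \<Rightarrow> 'l \<Rightarrow> 'l) \<Rightarrow> ('l list \<Rightarrow> 'b) \<Rightarrow> nat \<Rightarrow> (nat \<Rightarrow> nat)
     \<Rightarrow> ('c \<Rightarrow> 'l) list \<Rightarrow> 'c \<Rightarrow> 'b::comm_monoid_add"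
  where "FPhi_sup Delta phi f m \<sigma> gs c =
     sum_list (map (\<lambda>t. f (phi ((gs ! 0) (t ! \<sigma> 0)) ((gs ! 1) (t ! \<sigma> 1))
                           # map (\<lambda>i. (gs ! i) (t ! \<sigma> i)) [2..<m]))
       (iter_cop Delta (m - 1) c))"

text \<open>delta F for F induced by f \<in> Alt^n, evaluated on g_1 \<otimes> ... \<otimes> g_(n+1) at c.\<close>
definition TD_delta ::
  "('k::field \<Rightarrow> 'b::ab_group_add \<Rightarrow> 'b) \<Rightarrow> ('c \<Rightarrow> ('c \<times> 'c) list) \<Rightarrow> ('l \<Rightarrow> 'l \<Rightarrow> 'l)
     \<Rightarrow> ('l \<Rightarrow> 'b \<Rightarrow> 'b) \<Rightarrow> nat \<Rightarrow> ('l list \<Rightarrow> 'b) \<Rightarrow> ('c \<Rightarrow> 'l) list \<Rightarrow> 'c \<Rightarrow> 'b"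
  where "TD_delta sB Delta phi psi n f gs c =
     (if n = 0 then psi ((gs ! 0) c) (f [])
      else (\<Sum>\<sigma>\<in>unshuffles 1 n. sB (of_int (sign \<sigma>)) (PsiF_sup Delta psi f (n+1) \<sigma> (act \<sigma> gs) c))
         - (\<Sum>\<sigma>\<in>unshuffles 2 (n-1). sB (of_int (sign \<sigma>)) (FPhi_sup Delta phi f (n+1) \<sigma> (act \<sigma> gs) c)))"

end

theory Submission
  imports Defs
begin


definition rk :: "nat set \<Rightarrow> nat \<Rightarrow> nat" where
  "rk S c = card {i. i \<notin> S \<and> i < c}"

lemma nths_nth_card:
  assumes "c < length xs" "c \<in> A"
  shows "nths xs A ! card {i\<in>A. i < c} = xs ! c"
proof -
  have xs: "xs = take c xs @ (xs ! c # drop (Suc c) xs)"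
    using assms(1) by (simp add: Cons_nth_drop_Suc)
  have len: "length (nths (take c xs) A) = card {i\<in>A. i < c}"
    using assms(1) by (simp add: length_nths min_def) (metis (lifting) conj_commute)
  have "nths xs A = nths (take c xs) A @ (xs ! c # nths (drop (Suc c) xs) {j. Suc j + c \<in> A})"
    using assms by (subst xs) (simp add: nths_append nths_Cons min_def)
  then show ?thesis using len by (simp add: nth_append)
qed

lemma rk_strict: "c < d \<Longrightarrow> c \<notin> S \<Longrightarrow> rk S c < rk S d"
  unfolding rk_def
  by (rule psubset_card_mono) (auto intro: finite_subset[of _ "{..<d}"])

lemma rk_mono_iff: "c \<notin> S \<Longrightarrow> d \<notin> S \<Longrightarrow> rk S c < rk S d \<longleftrightarrow> c < d"
  by (metis linorder_neq_iff order_less_asym rk_strict)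

lemma rk_inj: "c \<notin> S \<Longrightarrow> d \<notin> S \<Longrightarrow> rk S c = rk S d \<longleftrightarrow> c = d"
  by (metis linorder_neq_iff order_less_irrefl rk_strict)

lemma rk_plus: "rk S c + card {s\<in>S. s < c} = c"
proof -
  have "{..<c} = {i. i \<notin> S \<and> i < c} \<union> {s\<in>S. s < c}" by auto
  then have "card {..<c} = card {i. i \<notin> S \<and> i < c} + card {s\<in>S. s < c}"
    by (metis (no_types, lifting) card_Un_disjoint disjoint_iff finite_Un finite_lessThan finite_subset mem_Collect_eq sup_ge1 sup_ge2)
  then show ?thesis by (simp add: rk_def)
qed

lemma rk_single: "rk {i} c + (if i < c then 1 else 0) = c"
proof -
  have "{s\<in>{i}. s < c} = (if i < c then {i} else {})" by auto
  then have "card {s\<in>{i}. s < c} = (if i < c then 1 else 0)" by simp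
  then show ?thesis using rk_plus[of "{i}" c] by simp
qed

lemma rk_pair: "a \<noteq> b \<Longrightarrow> rk {a,b} c + (if a < c then 1 else 0) + (if b < c then 1 else 0) = c"
proof -
  assume ab: "a \<noteq> b"
  have "card {s\<in>{a,b}. s < c} = (if a < c then 1 else 0) + (if b < c then 1 else 0)"
  proof -
    have "{s\<in>{a,b}. s < c} = (if a < c then {a} else {}) \<union> (if b < c then {b} else {})" by auto
    then show ?thesis using ab by auto
  qed
  then show ?thesis using rk_plus[of "{a,b}" c] by simp
qed

lemma nths_nth_rk:
  assumes "c < length xs" "c \<notin> S"
  shows "nths xs (-S) ! rk S c = xs ! c"
proof -
  have "rk S c = card {i\<in>-S. i < c}" by (simp add: rk_def)
  then show ?thesis using nths_nth_card[of c xs "-S"] assms by simp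
qed

lemma nths_nths_rk:
  assumes "T \<inter> S = {}"
  shows "nths (nths xs (-S)) (-(rk S ` T)) = nths xs (-(S \<union> T))"
proof -
  have "{i \<in> -S. \<exists>j \<in> -(rk S ` T). card {i' \<in> -S. i' < i} = j} = -(S \<union> T)"
  proof -
    have e: "card {i' \<in> -S. i' < i} = rk S i" for i by (simp add: rk_def)
    show ?thesis unfolding e using assms rk_inj by fastforce
  qed
  then show ?thesis by (simp add: nths_nths)
qed

lemma len_nths_compl: "length (nths xs (-S)) = card {c. c < length xs \<and> c \<notin> S}"
  by (simp add: length_nths)

lemma rk_bij:
  "bij_betw (rk S) {c. c < length xs \<and> c \<notin> S} {..<length (nths xs (-S))}"
proof -
  let ?A = "{c. c < length xs \<and> c \<notin> S}"
  have inj: "inj_on (rk S) ?A" by (auto simp: inj_on_def rk_inj)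
  have sub: "rk S ` ?A \<subseteq> {..<card ?A}"
  proof
    fix y assume "y \<in> rk S ` ?A"
    then obtain c where c: "c \<in> ?A" "y = rk S c" by auto
    have "{i. i \<notin> S \<and> i < c} \<subset> ?A" using c by auto
    then have "card {i. i \<notin> S \<and> i < c} < card ?A" by (rule psubset_card_mono[rotated]) simp
    then show "y \<in> {..<card ?A}" using c by (simp add: rk_def)
  qed
  have "card (rk S ` ?A) = card ?A" using inj by (simp add: card_image)
  then have "rk S ` ?A = {..<card ?A}" using sub
    by (metis card_lessThan card_subset_eq finite_lessThan)
  then show ?thesis using inj by (simp add: bij_betw_def len_nths_compl)
qed

lemma reindex1:
  "(\<Sum>i<length (nths xs (-S)). F i (nths xs (-S) ! i) (nths (nths xs (-S)) (-{i})))
   = (\<Sum>c\<in>{c. c < length xs \<and> c \<notin> S}. F (rk S c) (xs ! c) (nths xs (-(insert c S))))"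
proof -
  have "(\<Sum>i<length (nths xs (-S)). F i (nths xs (-S) ! i) (nths (nths xs (-S)) (-{i})))
    = (\<Sum>c\<in>{c. c < length xs \<and> c \<notin> S}. F (rk S c) (nths xs (-S) ! rk S c) (nths (nths xs (-S)) (-{rk S c})))"
    by (rule sum.reindex_bij_betw[symmetric, OF rk_bij])
  also have "\<dots> = (\<Sum>c\<in>{c. c < length xs \<and> c \<notin> S}. F (rk S c) (xs ! c) (nths xs (-(insert c S))))"
  proof (rule sum.cong[OF refl])
    fix c assume c: "c \<in> {c. c < length xs \<and> c \<notin> S}"
    have "nths (nths xs (-S)) (-{rk S c}) = nths xs (-(S \<union> {c}))"
      using nths_nths_rk[of "{c}" S xs] c by simp
    then show "F (rk S c) (nths xs (-S) ! rk S c) (nths (nths xs (-S)) (-{rk S c})) = F (rk S c) (xs ! c) (nths xs (-(insert c S)))"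
      using c by (simp add: nths_nth_rk)
  qed
  finally show ?thesis .
qed

lemma reindex2:
  "(\<Sum>(j,k)\<in>{(j,k). j < k \<and> k < length (nths xs (-S))}. F j k (nths xs (-S) ! j) (nths xs (-S) ! k) (nths (nths xs (-S)) (-{j,k})))
   = (\<Sum>(c,d)\<in>{(c,d). c < d \<and> d < length xs \<and> c \<notin> S \<and> d \<notin> S}. F (rk S c) (rk S d) (xs ! c) (xs ! d) (nths xs (-(insert c (insert d S)))))"
proof -
  let ?A = "{c. c < length xs \<and> c \<notin> S}"
  let ?P = "{(c,d). c < d \<and> d < length xs \<and> c \<notin> S \<and> d \<notin> S}"
  let ?Q = "{(j,k). j < k \<and> k < length (nths xs (-S))}"
  let ?h = "\<lambda>(c,d). (rk S c, rk S d)"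
  have b: "bij_betw (rk S) ?A {..<length (nths xs (-S))}" by (rule rk_bij)
  have "bij_betw ?h ?P ?Q"
  proof -
    have inj: "inj_on ?h ?P" by (auto simp: inj_on_def rk_inj)
    have "?h ` ?P = ?Q"
    proof
      show "?h ` ?P \<subseteq> ?Q"
      proof
        fix y assume "y \<in> ?h ` ?P"
        then obtain c d where cd: "(c,d) \<in> ?P" "y = (rk S c, rk S d)" by auto
        have "rk S d \<in> {..<length (nths xs (-S))}" using b cd(1) by (auto simp: bij_betw_def)
        then show "y \<in> ?Q" using cd by (auto simp: rk_strict)
      qed
    next
      show "?Q \<subseteq> ?h ` ?P"
      proof
        fix y assume y: "y \<in> ?Q"
        then obtain j k where jk: "y = (j,k)" "j < k" "k < length (nths xs (-S))" by auto
        have img: "rk S ` ?A = {..<length (nths xs (-S))}" using b by (simp add: bij_betw_def)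
        have "j \<in> rk S ` ?A" using jk img by auto
        then obtain c where c: "c \<in> ?A" "rk S c = j" by blast
        have "k \<in> rk S ` ?A" using jk img by auto
        then obtain d where d: "d \<in> ?A" "rk S d = k" by blast
        have "c < d" using c d jk rk_mono_iff[of c S d] by auto
        then show "y \<in> ?h ` ?P" using c d jk by (auto simp: image_iff)
      qed
    qed
    then show ?thesis using inj by (simp add: bij_betw_def)
  qed
  then have "(\<Sum>q\<in>?Q. (\<lambda>(j,k). F j k (nths xs (-S) ! j) (nths xs (-S) ! k) (nths (nths xs (-S)) (-{j,k}))) q)
    = (\<Sum>p\<in>?P. (\<lambda>(j,k). F j k (nths xs (-S) ! j) (nths xs (-S) ! k) (nths (nths xs (-S)) (-{j,k}))) (?h p))"
    by (rule sum.reindex_bij_betw[symmetric])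
  also have "\<dots> = (\<Sum>(c,d)\<in>?P. F (rk S c) (rk S d) (xs ! c) (xs ! d) (nths xs (-(insert c (insert d S)))))"
  proof (rule sum.cong[OF refl], clarify)
    fix c d assume cd: "c < d" "d < length xs" "c \<notin> S" "d \<notin> S"
    have "nths (nths xs (-S)) (-(rk S ` {c,d})) = nths xs (-(S \<union> {c,d}))"
      using nths_nths_rk[of "{c,d}" S xs] cd by simp
    then show "F (rk S c) (rk S d) (nths xs (-S) ! rk S c) (nths xs (-S) ! rk S d) (nths (nths xs (-S)) (-{rk S c, rk S d}))
       = F (rk S c) (rk S d) (xs ! c) (xs ! d) (nths xs (-(insert c (insert d S))))"
      using cd by (simp add: nths_nth_rk insert_commute)
  qed
  finally show ?thesis by simp
qed


definition sgnb :: "nat \<Rightarrow> 'b::ab_group_add \<Rightarrow> 'b" where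
  "sgnb k x = (if even k then x else - x)"

lemma sgnb_add: "sgnb k (x + y) = sgnb k x + sgnb k y" by (simp add: sgnb_def)
lemma sgnb_neg: "sgnb k (- x) = - sgnb k x" by (simp add: sgnb_def)
lemma sgnb_diff: "sgnb k (x - y) = sgnb k x - sgnb k y" by (simp add: sgnb_def)
lemma sgnb_zero[simp]: "sgnb k 0 = 0" by (simp add: sgnb_def)
lemma sgnb_sgnb: "sgnb i (sgnb j x) = sgnb (i + j) x" by (simp add: sgnb_def)
lemma sgnb_par: "even k = even k' \<Longrightarrow> sgnb k x = sgnb k' x" by (simp add: sgnb_def)
lemma sgnb_opp: "even k \<noteq> even k' \<Longrightarrow> sgnb k x = - sgnb k' x" by (auto simp add: sgnb_def)
lemma sgnb_sum: "sgnb k (sum g A) = (\<Sum>a\<in>A. sgnb k (g a))"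
  by (simp add: sgnb_def sum_negf)
lemma sgnb_Suc: "sgnb (Suc k) x = - sgnb k x" by (simp add: sgnb_def)

definition CEd :: "('l \<Rightarrow> 'l \<Rightarrow> 'l) \<Rightarrow> ('l \<Rightarrow> 'b::ab_group_add \<Rightarrow> 'b) \<Rightarrow> nat \<Rightarrow> ('l list \<Rightarrow> 'b) \<Rightarrow> 'l list \<Rightarrow> 'b" where
  "CEd phi psi n f xs =
     (\<Sum>i<n+1. sgnb i (psi (xs ! i) (f (nths xs (- {i})))))
   + (\<Sum>(j, k)\<in>{(j, k). j < k \<and> k < n+1}. sgnb (j + k) (f (phi (xs ! j) (xs ! k) # nths xs (- {j, k}))))"

lemma len_nths_sub: "S \<subseteq> {..<length xs} \<Longrightarrow> length (nths xs (-S)) = length xs - card S"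
proof -
  assume S: "S \<subseteq> {..<length xs}"
  have "{c. c < length xs \<and> c \<notin> S} = {..<length xs} - S" by auto
  then show ?thesis using S by (simp add: len_nths_compl card_Diff_subset finite_subset)
qed

lemma sum_pairs_Suc:
  "(\<Sum>(j,k)\<in>{(j,k). j < k \<and> k < Suc M}. h j k) = (\<Sum>k<M. h 0 (Suc k)) + (\<Sum>(j,k)\<in>{(j,k). j < k \<and> k < M}. h (Suc j) (Suc k))"
proof -
  have e: "{(j,k). j < k \<and> k < Suc M} = (\<lambda>k. (0, Suc k)) ` {..<M} \<union> (\<lambda>(j,k). (Suc j, Suc k)) ` {(j,k). j < k \<and> k < M}"
  proof (rule set_eqI, clarify)
    fix j k
    show "((j,k) \<in> {(j,k). j < k \<and> k < Suc M}) = ((j,k) \<in> (\<lambda>k. (0, Suc k)) ` {..<M} \<union> (\<lambda>(j,k). (Suc j, Suc k)) ` {(j,k). j < k \<and> k < M})"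
    proof (cases j)
      case 0 then show ?thesis by (cases k) (auto simp: image_iff)
    next
      case (Suc j') then show ?thesis by (cases k) (auto simp: image_iff)
    qed
  qed
  have fin: "finite {(j,k). j < k \<and> k < M}"
    by (rule finite_subset[of _ "{..<M} \<times> {..<M}"]) auto
  have "(\<Sum>(j,k)\<in>{(j,k). j < k \<and> k < Suc M}. h j k) =
     (\<Sum>p\<in>(\<lambda>k. (0, Suc k)) ` {..<M}. (\<lambda>(j,k). h j k) p) + (\<Sum>p\<in>(\<lambda>(j,k). (Suc j, Suc k)) ` {(j,k). j < k \<and> k < M}. (\<lambda>(j,k). h j k) p)"
    unfolding e by (rule sum.union_disjoint) (auto simp: fin)
  also have "\<dots> = (\<Sum>k<M. h 0 (Suc k)) + (\<Sum>(j,k)\<in>{(j,k). j < k \<and> k < M}. h (Suc j) (Suc k))"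
    by (subst sum.reindex, force simp: inj_on_def)+ (simp add: case_prod_unfold)
  finally show ?thesis .
qed

lemma nths_Cons_Suc: "nths (u # ys) (- {Suc i}) = u # nths ys (- {i})"
  by (simp add: nths_Cons, rule arg_cong[where f="nths ys"]) auto
lemma nths_Cons_0Suc: "nths (u # ys) (- {0, Suc k}) = nths ys (- {k})"
  by (simp add: nths_Cons, rule arg_cong[where f="nths ys"]) auto
lemma nths_Cons_SucSuc: "nths (u # ys) (- {Suc j, Suc k}) = u # nths ys (- {j, k})"
  by (simp add: nths_Cons, rule arg_cong[where f="nths ys"]) auto
lemma nths_Cons_0: "nths (u # ys) (- {0}) = ys"
  by (simp add: nths_Cons nths_all)

locale ce =
  fixes phi :: "'l::ab_group_add \<Rightarrow> 'l \<Rightarrow> 'l" and psi :: "'l \<Rightarrow> 'b::ab_group_add \<Rightarrow> 'b"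
    and f :: "'l list \<Rightarrow> 'b" and n :: nat
  assumes psi_add: "psi x (a + b) = psi x a + psi x b"
    and module: "psi (phi x y) b = psi x (psi y b) - psi y (psi x b)"
    and phi_anti: "phi y x = - phi x y"
    and jacobi: "phi (phi x y) z - phi (phi x z) y + phi (phi y z) x = 0"
    and f_add: "length r + 1 = n \<Longrightarrow> f ((u + v) # r) = f (u # r) + f (v # r)"
    and f_swap: "length r + 2 = n \<Longrightarrow> f (v # u # r) = - f (u # v # r)"
begin

lemma psi_zero: "psi x 0 = 0"
  using psi_add[of x 0 0] by simp
lemma psi_neg: "psi x (- a) = - psi x a"
  using psi_add[of x a "- a"] psi_zero by (metis add.right_inverse minus_unique)
lemma psi_diff: "psi x (a - b) = psi x a - psi x b"
  using psi_add[of x a "- b"] psi_neg by simp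
lemma psi_sum: "psi x (sum g A) = (\<Sum>a\<in>A. psi x (g a))"
  by (induction A rule: infinite_finite_induct) (auto simp: psi_zero psi_add)
lemma psi_sgnb: "psi x (sgnb k a) = sgnb k (psi x a)"
  by (simp add: sgnb_def psi_neg)

lemma f_zero: "length r + 1 = n \<Longrightarrow> f (0 # r) = 0"
  using f_add[of r 0 0] by simp
lemma f_neg: "length r + 1 = n \<Longrightarrow> f ((- u) # r) = - f (u # r)"
  using f_add[of r u "- u"] f_zero by (metis add.right_inverse minus_unique)
lemma f_diff: "length r + 1 = n \<Longrightarrow> f ((u - v) # r) = f (u # r) - f (v # r)"
  using f_add[of r u "- v"] f_neg by simp

end


abbreviation "PS N \<equiv> {(a::nat,b). a < b \<and> b < N}"

lemma finPS: "finite (PS N)"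
  by (rule finite_subset[of _ "{..<N} \<times> {..<N}"]) auto

lemma finPS_gen[simp]: "finite {p. fst p < snd p \<and> snd p < (N::nat) \<and> Q p}"
  by (rule finite_subset[of _ "{..<N} \<times> {..<N}"]) auto
lemma finPS_gen2[simp]: "finite {p. fst p < snd p \<and> snd p < (N::nat)}"
  by (rule finite_subset[of _ "{..<N} \<times> {..<N}"]) auto

lemma sum_offdiag:
  "(\<Sum>i<N. \<Sum>c\<in>{c. c < N \<and> c \<notin> {i}}. F i c) = (\<Sum>(a,b)\<in>PS N. F a b + F b a)"
proof -
  have "(\<Sum>i<N. \<Sum>c\<in>{c. c < N \<and> c \<notin> {i}}. F i c) = (\<Sum>(i,c)\<in>Sigma {..<N} (\<lambda>i. {c. c < N \<and> c \<notin> {i}}). F i c)"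
    by (rule sum.Sigma) auto
  also have "Sigma {..<N} (\<lambda>i. {c. c < N \<and> c \<notin> {i}}) = PS N \<union> prod.swap ` PS N"
    by (auto simp: image_iff)
  also have "(\<Sum>(i,c)\<in>PS N \<union> prod.swap ` PS N. F i c) = (\<Sum>(i,c)\<in>PS N. F i c) + (\<Sum>(i,c)\<in>prod.swap ` PS N. F i c)"
    by (rule sum.union_disjoint) (auto simp: finPS)
  also have "(\<Sum>(i,c)\<in>prod.swap ` PS N. F i c) = (\<Sum>(i,c)\<in>PS N. F c i)"
    by (subst sum.reindex) (auto simp: inj_on_def case_prod_unfold)
  finally show ?thesis by (simp add: sum.distrib[symmetric] case_prod_unfold)
qed

lemma sum_triple_swap:
  "(\<Sum>i<N. \<Sum>(c,d)\<in>{(c,d). c < d \<and> d < N \<and> c \<notin> {i} \<and> d \<notin> {i}}. G i c d)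
   = (\<Sum>(a,b)\<in>PS N. \<Sum>e\<in>{e. e < N \<and> e \<notin> {a,b}}. G e a b)"
proof -
  have fin1: "finite {(c,d). c < d \<and> d < N \<and> c \<notin> {i} \<and> d \<notin> {i}}" for i
    by (rule finite_subset[OF _ finPS[of N]]) auto
  have "(\<Sum>i<N. \<Sum>(c,d)\<in>{(c,d). c < d \<and> d < N \<and> c \<notin> {i} \<and> d \<notin> {i}}. G i c d)
     = (\<Sum>(i,p)\<in>Sigma {..<N} (\<lambda>i. {(c,d). c < d \<and> d < N \<and> c \<notin> {i} \<and> d \<notin> {i}}). G i (fst p) (snd p))"
    by (subst sum.Sigma[symmetric]) (auto simp: fin1 case_prod_unfold)
  also have "\<dots> = (\<Sum>(p,i)\<in>Sigma (PS N) (\<lambda>(a,b). {e. e < N \<and> e \<notin> {a,b}}). G i (fst p) (snd p))"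
  proof -
    have e: "Sigma (PS N) (\<lambda>(a,b). {e. e < N \<and> e \<notin> {a,b}}) = prod.swap ` Sigma {..<N} (\<lambda>i. {(c,d). c < d \<and> d < N \<and> c \<notin> {i} \<and> d \<notin> {i}})"
      by (auto simp: image_iff)
    show ?thesis unfolding e by (subst sum.reindex) (auto simp: inj_on_def case_prod_unfold)
  qed
  also have "\<dots> = (\<Sum>(a,b)\<in>PS N. \<Sum>e\<in>{e. e < N \<and> e \<notin> {a,b}}. G e a b)"
    by (subst sum.Sigma[symmetric]) (auto simp: finPS case_prod_unfold)
  finally show ?thesis .
qed

lemma sum_triples:
  "(\<Sum>(a,b)\<in>PS N. \<Sum>e\<in>{e. e < N \<and> e \<notin> {a,b}}. H a b e)
   = (\<Sum>(p,q,r)\<in>{(p,q,r). p < q \<and> q < r \<and> r < N}. H p q r + H p r q + H q r p)"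
proof -
  let ?T = "{(p,q,r). p < q \<and> q < r \<and> r < (N::nat)}"
  let ?Sg = "Sigma (PS N) (\<lambda>(a,b). {e. e < N \<and> e \<notin> {a,b}})"
  let ?i1 = "\<lambda>(p,q,r). ((p,q),r)" and ?i2 = "\<lambda>(p,q,r). ((p,r),q)" and ?i3 = "\<lambda>(p,q,r). ((q,r),p)"
  have finT: "finite ?T" by (rule finite_subset[of _ "{..<N} \<times> {..<N} \<times> {..<N}"]) auto
  have "(\<Sum>(a,b)\<in>PS N. \<Sum>e\<in>{e. e < N \<and> e \<notin> {a,b}}. H a b e) = (\<Sum>(p,e)\<in>?Sg. H (fst p) (snd p) e)"
    by (subst sum.Sigma[symmetric]) (auto simp: finPS case_prod_unfold)
  also have "?Sg = (?i1 ` ?T \<union> ?i2 ` ?T) \<union> ?i3 ` ?T"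
  proof (rule set_eqI)
    fix z :: "(nat \<times> nat) \<times> nat"
    obtain a b e where z: "z = ((a,b),e)" by (metis prod.exhaust)
    show "z \<in> ?Sg \<longleftrightarrow> z \<in> (?i1 ` ?T \<union> ?i2 ` ?T) \<union> ?i3 ` ?T"
      unfolding z by (auto simp: image_iff)
  qed
  also have "(\<Sum>(p,e)\<in>(?i1 ` ?T \<union> ?i2 ` ?T) \<union> ?i3 ` ?T. H (fst p) (snd p) e)
     = (\<Sum>(p,e)\<in>?i1 ` ?T. H (fst p) (snd p) e) + (\<Sum>(p,e)\<in>?i2 ` ?T. H (fst p) (snd p) e) + (\<Sum>(p,e)\<in>?i3 ` ?T. H (fst p) (snd p) e)"
    by (subst sum.union_disjoint, (force simp: finT)+)+ (rule refl)?
  also have "\<dots> = (\<Sum>(p,q,r)\<in>?T. H p q r) + (\<Sum>(p,q,r)\<in>?T. H p r q) + (\<Sum>(p,q,r)\<in>?T. H q r p)"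
    by (subst sum.reindex, force simp: inj_on_def)+ (simp add: case_prod_unfold)
  finally show ?thesis by (simp add: sum.distrib[symmetric] case_prod_unfold)
qed

lemma sum_quad_cancel:
  fixes H :: "nat \<Rightarrow> nat \<Rightarrow> nat \<Rightarrow> nat \<Rightarrow> 'b::ab_group_add"
  assumes "\<And>a b e h. a < b \<Longrightarrow> b < N \<Longrightarrow> e < h \<Longrightarrow> h < N \<Longrightarrow> e \<notin> {a,b} \<Longrightarrow> h \<notin> {a,b} \<Longrightarrow> a < e \<Longrightarrow> H a b e h + H e h a b = 0"
  shows "(\<Sum>(a,b)\<in>PS N. \<Sum>(e,h)\<in>{(e,h). e < h \<and> h < N \<and> e \<notin> {a,b} \<and> h \<notin> {a,b}}. H a b e h) = 0"
proof -
  let ?Q = "Sigma (PS N) (\<lambda>(a,b). {(e,h). e < h \<and> h < N \<and> e \<notin> {a,b} \<and> h \<notin> {a,b}})"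
  let ?Q1 = "{z\<in>?Q. fst (fst z) < fst (snd z)}"
  let ?Q2 = "{z\<in>?Q. fst (snd z) < fst (fst z)}"
  have finQ: "finite ?Q" by (rule finite_subset[of _ "PS N \<times> PS N"]) (auto simp: finPS)
  have fin2: "finite {(e,h). e < h \<and> h < N \<and> e \<notin> {a,b} \<and> h \<notin> {a,b}}" for a b
    by (rule finite_subset[OF _ finPS[of N]]) auto
  have "(\<Sum>(a,b)\<in>PS N. \<Sum>(e,h)\<in>{(e,h). e < h \<and> h < N \<and> e \<notin> {a,b} \<and> h \<notin> {a,b}}. H a b e h)
     = (\<Sum>(p,q)\<in>?Q. H (fst p) (snd p) (fst q) (snd q))"
    by (subst sum.Sigma[symmetric]) (auto simp: finPS fin2 case_prod_unfold)
  also have "\<dots> = (\<Sum>z\<in>?Q. H (fst (fst z)) (snd (fst z)) (fst (snd z)) (snd (snd z)))"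
    by (simp add: case_prod_unfold)
  also have "?Q = ?Q1 \<union> ?Q2" by auto
  also have "(\<Sum>z\<in>?Q1 \<union> ?Q2. H (fst (fst z)) (snd (fst z)) (fst (snd z)) (snd (snd z)))
     = (\<Sum>z\<in>?Q1. H (fst (fst z)) (snd (fst z)) (fst (snd z)) (snd (snd z))) + (\<Sum>z\<in>?Q2. H (fst (fst z)) (snd (fst z)) (fst (snd z)) (snd (snd z)))"
    by (rule sum.union_disjoint) (auto intro: finite_subset[OF _ finQ])
  also have "?Q2 = prod.swap ` ?Q1" by (auto simp: image_iff)
  also have "(\<Sum>z\<in>prod.swap ` ?Q1. H (fst (fst z)) (snd (fst z)) (fst (snd z)) (snd (snd z)))
     = (\<Sum>z\<in>?Q1. H (fst (snd z)) (snd (snd z)) (fst (fst z)) (snd (fst z)))"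
    by (subst sum.reindex) (auto simp: inj_on_def)
  also have "(\<Sum>z\<in>?Q1. H (fst (fst z)) (snd (fst z)) (fst (snd z)) (snd (snd z))) + \<dots> = 0"
    by (subst sum.distrib[symmetric], rule sum.neutral) (auto intro!: assms)
  finally show ?thesis .
qed


lemma sgnb_0[simp]: "sgnb 0 x = x" by (simp add: sgnb_def)

lemma CEd_nths:
  assumes "length (nths xs (-S)) = m + 1"
  shows "CEd phi psi m f (nths xs (-S)) =
    (\<Sum>c\<in>{c. c < length xs \<and> c \<notin> S}. sgnb (rk S c) (psi (xs!c) (f (nths xs (-insert c S)))))
  + (\<Sum>(c,d)\<in>{(c,d). c < d \<and> d < length xs \<and> c \<notin> S \<and> d \<notin> S}.
       sgnb (rk S c + rk S d) (f (phi (xs!c) (xs!d) # nths xs (-insert c (insert d S)))))"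
proof -
  have "CEd phi psi m f (nths xs (-S)) =
    (\<Sum>i<length (nths xs (-S)). sgnb i (psi (nths xs (-S) ! i) (f (nths (nths xs (-S)) (-{i})))))
  + (\<Sum>(j,k)\<in>{(j,k). j < k \<and> k < length (nths xs (-S))}. sgnb (j+k) (f (phi (nths xs (-S) ! j) (nths xs (-S) ! k) # nths (nths xs (-S)) (-{j,k}))))"
    unfolding CEd_def assms ..
  note e1 = this
  show ?thesis
    using reindex1[of "\<lambda>i y r. sgnb i (psi y (f r))" xs S]
      reindex2[of "\<lambda>j k y z r. sgnb (j+k) (f (phi y z # r))" xs S] e1
    by simp
qed

lemma CEd_Cons:
  assumes "length (nths xs (-S)) = m"
  shows "CEd phi psi m f (w # nths xs (-S)) =
    psi w (f (nths xs (-S)))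
  + (\<Sum>c\<in>{c. c < length xs \<and> c \<notin> S}. sgnb (Suc (rk S c)) (psi (xs!c) (f (w # nths xs (-insert c S)))))
  + ((\<Sum>c\<in>{c. c < length xs \<and> c \<notin> S}. sgnb (Suc (rk S c)) (f (phi w (xs!c) # nths xs (-insert c S))))
  + (\<Sum>(c,d)\<in>{(c,d). c < d \<and> d < length xs \<and> c \<notin> S \<and> d \<notin> S}.
       sgnb (Suc (rk S c) + Suc (rk S d)) (f (phi (xs!c) (xs!d) # w # nths xs (-insert c (insert d S))))))"
proof -
  let ?R = "nths xs (-S)"
  have p: "(\<Sum>(j,k)\<in>{(j,k). j < k \<and> k < Suc m}. sgnb (j + k) (f (phi ((w # ?R) ! j) ((w # ?R) ! k) # nths (w # ?R) (- {j, k}))))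
     = (\<Sum>k<m. sgnb (0 + Suc k) (f (phi ((w # ?R) ! 0) ((w # ?R) ! Suc k) # nths (w # ?R) (- {0, Suc k}))))
     + (\<Sum>(j,k)\<in>{(j,k). j < k \<and> k < m}. sgnb (Suc j + Suc k) (f (phi ((w # ?R) ! Suc j) ((w # ?R) ! Suc k) # nths (w # ?R) (- {Suc j, Suc k}))))"
    by (rule sum_pairs_Suc)
  have "CEd phi psi m f (w # ?R) = (\<Sum>i<Suc m. sgnb i (psi ((w # ?R) ! i) (f (nths (w # ?R) (- {i})))))
     + (\<Sum>(j,k)\<in>{(j,k). j < k \<and> k < Suc m}. sgnb (j + k) (f (phi ((w # ?R) ! j) ((w # ?R) ! k) # nths (w # ?R) (- {j, k}))))"
    by (simp only: CEd_def Suc_eq_plus1)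
  also have "\<dots> = (sgnb 0 (psi ((w # ?R) ! 0) (f (nths (w # ?R) (- {0})))) + (\<Sum>i<m. sgnb (Suc i) (psi ((w # ?R) ! Suc i) (f (nths (w # ?R) (- {Suc i}))))))
     + ((\<Sum>k<m. sgnb (0 + Suc k) (f (phi ((w # ?R) ! 0) ((w # ?R) ! Suc k) # nths (w # ?R) (- {0, Suc k}))))
     + (\<Sum>(j,k)\<in>{(j,k). j < k \<and> k < m}. sgnb (Suc j + Suc k) (f (phi ((w # ?R) ! Suc j) ((w # ?R) ! Suc k) # nths (w # ?R) (- {Suc j, Suc k})))))"
    by (simp only: sum.lessThan_Suc_shift p)
  also have "\<dots> =
     psi w (f ?R)
   + (\<Sum>i<length ?R. sgnb (Suc i) (psi (?R ! i) (f (w # nths ?R (-{i})))))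
   + ((\<Sum>k<length ?R. sgnb (Suc k) (f (phi w (?R ! k) # nths ?R (-{k}))))
   + (\<Sum>(j,k)\<in>{(j,k). j < k \<and> k < length ?R}. sgnb (Suc j + Suc k) (f (phi (?R ! j) (?R ! k) # w # nths ?R (-{j,k})))))"
    unfolding assms by (simp add: nths_Cons_Suc nths_Cons_0Suc nths_Cons_SucSuc nths_Cons_0 add.assoc)
  finally have e1: "CEd phi psi m f (w # ?R) = psi w (f ?R)
   + (\<Sum>i<length ?R. sgnb (Suc i) (psi (?R ! i) (f (w # nths ?R (-{i})))))
   + ((\<Sum>k<length ?R. sgnb (Suc k) (f (phi w (?R ! k) # nths ?R (-{k}))))
   + (\<Sum>(j,k)\<in>{(j,k). j < k \<and> k < length ?R}. sgnb (Suc j + Suc k) (f (phi (?R ! j) (?R ! k) # w # nths ?R (-{j,k})))))" .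
  show ?thesis
    using reindex1[of "\<lambda>i y r. sgnb (Suc i) (psi y (f (w # r)))" xs S]
      reindex1[of "\<lambda>i y r. sgnb (Suc i) (f (phi w y # r))" xs S]
      reindex2[of "\<lambda>j k y z r. sgnb (Suc j + Suc k) (f (phi y z # w # r))" xs S] e1
    by simp
qed


lemma card_sub3: "(p::nat) < q \<Longrightarrow> q < r \<Longrightarrow> card {p,q,r} = (3::nat)" by (auto simp add: card_insert_if)

context ce
begin

lemma term_AC:
  assumes ab: "a < b"
  shows "sgnb (a + rk {a} b) (psi (xs!a) (psi (xs!b) (f (nths xs (-insert b {a})))))
       + sgnb (b + rk {b} a) (psi (xs!b) (psi (xs!a) (f (nths xs (-insert a {b})))))
       + sgnb (a + b) (psi (phi (xs!a) (xs!b)) (f (nths xs (-{a,b})))) = 0"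
proof -
  have r1: "rk {a} b + 1 = b" using rk_single[of a b] ab by simp
  have r2: "rk {b} a = a" using rk_single[of b a] ab by simp
  have s1: "sgnb (a + rk {a} b) X = - sgnb (a + b) X" for X :: 'b
    by (rule sgnb_opp) (use r1 in presburger)
  have s2: "sgnb (b + rk {b} a) X = sgnb (a + b) X" for X :: 'b
    by (rule sgnb_par) (use r2 in presburger)
  show ?thesis by (simp add: s1 s2 module sgnb_diff insert_commute)
qed

lemma par_BC:
  assumes "a < b" "e \<noteq> a" "e \<noteq> b"
    "ra + (if e < a then 1 else 0) = a" "rb + (if e < b then 1 else 0) = b"
    "re + (if a < e then 1 else 0) + (if b < e then 1 else 0) = (e::nat)"
  shows "even (e + (ra + rb)) \<noteq> even (a + b + Suc re)"
proof -
  have "ra + rb + re + 2 = a + b + e"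
    using assms by (auto split: if_splits)
  then show ?thesis by presburger
qed

lemma term_BC:
  assumes ab: "a < b" and e: "e \<noteq> a" "e \<noteq> b"
  shows "sgnb (e + (rk {e} a + rk {e} b)) (psi (xs!e) (f (phi (xs!a) (xs!b) # nths xs (-insert a (insert b {e})))))
       + sgnb (a + b + Suc (rk {a,b} e)) (psi (xs!e) (f (phi (xs!a) (xs!b) # nths xs (-insert e {a,b})))) = 0"
proof -
  have "even (e + (rk {e} a + rk {e} b)) \<noteq> even (a + b + Suc (rk {a,b} e))"
    by (rule par_BC[OF ab e rk_single rk_single rk_pair]) (use ab in simp)
  then have s: "sgnb (e + (rk {e} a + rk {e} b)) X = - sgnb (a + b + Suc (rk {a,b} e)) X" for X :: 'b
    by (rule sgnb_opp)
  show ?thesis by (simp add: s insert_commute)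
qed

lemma term_D1:
  assumes pqr: "p < q" "q < r" "r < length xs" and len: "length xs = n + 2"
  shows "sgnb (p + q + Suc (rk {p,q} r)) (f (phi (phi (xs!p) (xs!q)) (xs!r) # nths xs (-insert r {p,q})))
       + sgnb (p + r + Suc (rk {p,r} q)) (f (phi (phi (xs!p) (xs!r)) (xs!q) # nths xs (-insert q {p,r})))
       + sgnb (q + r + Suc (rk {q,r} p)) (f (phi (phi (xs!q) (xs!r)) (xs!p) # nths xs (-insert p {q,r}))) = 0"
proof -
  let ?R = "nths xs (-{p,q,r})"
  have lR: "length ?R + 1 = n"
    using len_nths_sub[of "{p,q,r}" xs] pqr len card_sub3[of p q r] by auto
  have r1: "rk {p,q} r + 2 = r" using rk_pair[of p q r] pqr by simp
  have r2: "rk {p,r} q + 1 = q" using rk_pair[of p r q] pqr by simp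
  have r3: "rk {q,r} p = p" using rk_pair[of q r p] pqr by simp
  have s1: "sgnb (p + q + Suc (rk {p,q} r)) X = sgnb (q + r + Suc (rk {q,r} p)) X" for X :: 'b
    by (rule sgnb_par) (use r1 r3 in presburger)
  have s2: "sgnb (p + r + Suc (rk {p,r} q)) X = - sgnb (q + r + Suc (rk {q,r} p)) X" for X :: 'b
    by (rule sgnb_opp) (use r2 r3 in presburger)
  have e1: "insert r {p,q} = {p,q,r}" "insert q {p,r} = {p,q,r}" by auto
  let ?A = "phi (phi (xs!p) (xs!q)) (xs!r)" and ?B = "phi (phi (xs!p) (xs!r)) (xs!q)" and ?C = "phi (phi (xs!q) (xs!r)) (xs!p)"
  have j1: "f ((?A - ?B + ?C) # ?R) = f ((?A - ?B) # ?R) + f (?C # ?R)" by (rule f_add[OF lR])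
  have j2: "f ((?A - ?B) # ?R) = f (?A # ?R) - f (?B # ?R)" by (rule f_diff[OF lR])
  have j3: "?A - ?B + ?C = 0" by (rule jacobi)
  have J: "f (?A # ?R) - f (?B # ?R) + f (?C # ?R) = 0"
    using j1 j2 f_zero[OF lR] unfolding j3 by simp
  have "sgnb (q + r + Suc (rk {q,r} p)) (f (phi (phi (xs!p) (xs!q)) (xs!r) # ?R) - f (phi (phi (xs!p) (xs!r)) (xs!q) # ?R) + f (phi (phi (xs!q) (xs!r)) (xs!p) # ?R)) = 0"
    by (simp add: J)
  then show ?thesis unfolding e1 s1 s2 by (simp add: sgnb_add sgnb_diff)
qed

lemma par_D2:
  assumes "a < b" "e < h" "e \<noteq> a" "e \<noteq> b" "h \<noteq> a" "h \<noteq> b"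
    "r1 + (if a < e then 1 else 0) + (if b < e then 1 else 0) = (e::nat)"
    "r2 + (if a < h then 1 else 0) + (if b < h then 1 else 0) = (h::nat)"
    "r3 + (if e < a then 1 else 0) + (if h < a then 1 else 0) = (a::nat)"
    "r4 + (if e < b then 1 else 0) + (if h < b then 1 else 0) = (b::nat)"
  shows "even (a + b + (Suc r1 + Suc r2)) = even (e + h + (Suc r3 + Suc r4))"
proof -
  have "r1 + r2 + r3 + r4 + 4 = a + b + e + h"
    using assms by (auto split: if_splits)
  then show ?thesis by presburger
qed

lemma term_D2:
  assumes ab: "a < b" "b < length xs" and eh: "e < h" "h < length xs" and d: "e \<noteq> a" "e \<noteq> b" "h \<noteq> a" "h \<noteq> b"
    and len: "length xs = n + 2"
  shows "sgnb (a + b + (Suc (rk {a,b} e) + Suc (rk {a,b} h))) (f (phi (xs!e) (xs!h) # phi (xs!a) (xs!b) # nths xs (-insert e (insert h {a,b}))))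
       + sgnb (e + h + (Suc (rk {e,h} a) + Suc (rk {e,h} b))) (f (phi (xs!a) (xs!b) # phi (xs!e) (xs!h) # nths xs (-insert a (insert b {e,h})))) = 0"
proof -
  let ?R = "nths xs (-{a,b,e,h})"
  have c4: "card {a,b,e,h} = 4" using ab eh d by auto
  have "card {a,b,e,h} \<le> card {..<length xs}"
    by (rule card_mono) (use ab eh in auto)
  then have "4 \<le> n + 2" using c4 len by simp
  then have lR: "length ?R + 2 = n"
    using len_nths_sub[of "{a,b,e,h}" xs] ab eh len c4 by auto
  have "even (a + b + (Suc (rk {a,b} e) + Suc (rk {a,b} h))) = even (e + h + (Suc (rk {e,h} a) + Suc (rk {e,h} b)))"
    by (rule par_D2[OF ab(1) eh(1) d rk_pair rk_pair rk_pair rk_pair]) (use ab eh in simp_all)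
  then have s: "sgnb (a + b + (Suc (rk {a,b} e) + Suc (rk {a,b} h))) X = sgnb (e + h + (Suc (rk {e,h} a) + Suc (rk {e,h} b))) X" for X :: 'b
    by (rule sgnb_par)
  have e1: "insert e (insert h {a,b}) = {a,b,e,h}" by auto
  show ?thesis unfolding e1 s f_swap[OF lR, of "phi (xs!a) (xs!b)" "phi (xs!e) (xs!h)"] sgnb_neg by simp
qed

end


context ce
begin

lemma dd0:
  assumes len: "length xs = n + 2"
  shows "CEd phi psi (n+1) (CEd phi psi n f) xs = 0"
proof -
  let ?g = "CEd phi psi n f"
  let ?N = "length xs"
  define At where "At i c = sgnb (i + rk {i} c) (psi (xs!i) (psi (xs!c) (f (nths xs (-insert c {i})))))" for i c
  define Bt where "Bt i c d = sgnb (i + (rk {i} c + rk {i} d)) (psi (xs!i) (f (phi (xs!c) (xs!d) # nths xs (-insert c (insert d {i})))))" for i c d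
  define C0t where "C0t a b = sgnb (a + b) (psi (phi (xs!a) (xs!b)) (f (nths xs (-{a,b}))))" for a b
  define C1t where "C1t a b e = sgnb (a + b + Suc (rk {a,b} e)) (psi (xs!e) (f (phi (xs!a) (xs!b) # nths xs (-insert e {a,b}))))" for a b e
  define D1t where "D1t a b e = sgnb (a + b + Suc (rk {a,b} e)) (f (phi (phi (xs!a) (xs!b)) (xs!e) # nths xs (-insert e {a,b})))" for a b e
  define D2t where "D2t a b e h = sgnb (a + b + (Suc (rk {a,b} e) + Suc (rk {a,b} h))) (f (phi (xs!e) (xs!h) # phi (xs!a) (xs!b) # nths xs (-insert e (insert h {a,b}))))" for a b e h

  have gY: "?g (nths xs (-{i})) =
     (\<Sum>c\<in>{c. c < ?N \<and> c \<notin> {i}}. sgnb (rk {i} c) (psi (xs!c) (f (nths xs (-insert c {i})))))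
   + (\<Sum>(c,d)\<in>{(c,d). c < d \<and> d < ?N \<and> c \<notin> {i} \<and> d \<notin> {i}}. sgnb (rk {i} c + rk {i} d) (f (phi (xs!c) (xs!d) # nths xs (-insert c (insert d {i})))))"
    if "i < ?N" for i
    by (rule CEd_nths) (use that len len_nths_sub[of "{i}" xs] in auto)
  have gZ: "?g (phi (xs!a) (xs!b) # nths xs (-{a,b})) =
      psi (phi (xs!a) (xs!b)) (f (nths xs (-{a,b})))
    + (\<Sum>e\<in>{c. c < ?N \<and> c \<notin> {a,b}}. sgnb (Suc (rk {a,b} e)) (psi (xs!e) (f (phi (xs!a) (xs!b) # nths xs (-insert e {a,b})))))
    + ((\<Sum>e\<in>{c. c < ?N \<and> c \<notin> {a,b}}. sgnb (Suc (rk {a,b} e)) (f (phi (phi (xs!a) (xs!b)) (xs!e) # nths xs (-insert e {a,b}))))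
    + (\<Sum>(e,h)\<in>{(c,d). c < d \<and> d < ?N \<and> c \<notin> {a,b} \<and> d \<notin> {a,b}}. sgnb (Suc (rk {a,b} e) + Suc (rk {a,b} h)) (f (phi (xs!e) (xs!h) # phi (xs!a) (xs!b) # nths xs (-insert e (insert h {a,b}))))))"
    if "a < b" "b < ?N" for a b
    by (rule CEd_Cons) (use that len len_nths_sub[of "{a,b}" xs] in auto)

  have main: "CEd phi psi (n+1) ?g xs =
      (\<Sum>i<?N. sgnb i (psi (xs!i) (?g (nths xs (-{i})))))
    + (\<Sum>(a,b)\<in>PS ?N. sgnb (a+b) (?g (phi (xs!a) (xs!b) # nths xs (-{a,b}))))"
    by (subst CEd_def) (simp add: len)

  let ?SA = "\<Sum>i<?N. \<Sum>c\<in>{c. c < ?N \<and> c \<notin> {i}}. At i c"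
  let ?SB = "\<Sum>i<?N. \<Sum>(c,d)\<in>{(c,d). c < d \<and> d < ?N \<and> c \<notin> {i} \<and> d \<notin> {i}}. Bt i c d"
  let ?SC0 = "\<Sum>(a,b)\<in>PS ?N. C0t a b"
  let ?SC1 = "\<Sum>(a,b)\<in>PS ?N. \<Sum>e\<in>{e. e < ?N \<and> e \<notin> {a,b}}. C1t a b e"
  let ?SD1 = "\<Sum>(a,b)\<in>PS ?N. \<Sum>e\<in>{e. e < ?N \<and> e \<notin> {a,b}}. D1t a b e"
  let ?SD2 = "\<Sum>(a,b)\<in>PS ?N. \<Sum>(e,h)\<in>{(e,h). e < h \<and> h < ?N \<and> e \<notin> {a,b} \<and> h \<notin> {a,b}}. D2t a b e h"

  have T1: "(\<Sum>i<?N. sgnb i (psi (xs!i) (?g (nths xs (-{i}))))) = ?SA + ?SB"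
    unfolding sum.distrib[symmetric]
  proof (rule sum.cong[OF refl])
    fix i assume "i \<in> {..<?N}"
    then show "sgnb i (psi (xs!i) (?g (nths xs (-{i})))) =
      (\<Sum>c\<in>{c. c < ?N \<and> c \<notin> {i}}. At i c) + (\<Sum>(c,d)\<in>{(c,d). c < d \<and> d < ?N \<and> c \<notin> {i} \<and> d \<notin> {i}}. Bt i c d)"
      by (simp add: gY psi_add psi_sum psi_sgnb sgnb_add sgnb_sum sgnb_sgnb At_def Bt_def case_prod_unfold)
  qed
  have T2: "(\<Sum>(a,b)\<in>PS ?N. sgnb (a+b) (?g (phi (xs!a) (xs!b) # nths xs (-{a,b})))) = ?SC0 + ?SC1 + ?SD1 + ?SD2"
  proof -
    have "(\<Sum>(a,b)\<in>PS ?N. sgnb (a+b) (?g (phi (xs!a) (xs!b) # nths xs (-{a,b}))))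
      = (\<Sum>(a,b)\<in>PS ?N. C0t a b + (\<Sum>e\<in>{e. e < ?N \<and> e \<notin> {a,b}}. C1t a b e) + ((\<Sum>e\<in>{e. e < ?N \<and> e \<notin> {a,b}}. D1t a b e)
          + (\<Sum>(e,h)\<in>{(e,h). e < h \<and> h < ?N \<and> e \<notin> {a,b} \<and> h \<notin> {a,b}}. D2t a b e h)))"
    proof (rule sum.cong[OF refl], clarify)
      fix a b assume ab: "a < b" "b < ?N"
      show "sgnb (a+b) (?g (phi (xs!a) (xs!b) # nths xs (-{a,b}))) =
        C0t a b + (\<Sum>e\<in>{e. e < ?N \<and> e \<notin> {a,b}}. C1t a b e) + ((\<Sum>e\<in>{e. e < ?N \<and> e \<notin> {a,b}}. D1t a b e)
          + (\<Sum>(e,h)\<in>{(e,h). e < h \<and> h < ?N \<and> e \<notin> {a,b} \<and> h \<notin> {a,b}}. D2t a b e h))"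
        unfolding gZ[OF ab] by (simp add: sgnb_add sgnb_sum sgnb_sgnb C0t_def C1t_def D1t_def D2t_def case_prod_unfold)
    qed
    then show ?thesis by (simp add: sum.distrib case_prod_unfold add.assoc)
  qed

  have AC: "?SA + ?SC0 = 0"
  proof -
    have "?SA = (\<Sum>(a,b)\<in>PS ?N. At a b + At b a)" by (rule sum_offdiag)
    then have "?SA + ?SC0 = (\<Sum>(a,b)\<in>PS ?N. At a b + At b a + C0t a b)"
      by (simp add: sum.distrib[symmetric] case_prod_unfold)
    also have "\<dots> = 0"
      by (rule sum.neutral) (auto simp: At_def C0t_def term_AC)
    finally show ?thesis .
  qed
  have BC: "?SB + ?SC1 = 0"
  proof -
    have "?SB = (\<Sum>(a,b)\<in>PS ?N. \<Sum>e\<in>{e. e < ?N \<and> e \<notin> {a,b}}. Bt e a b)" by (rule sum_triple_swap)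
    then have "?SB + ?SC1 = (\<Sum>(a,b)\<in>PS ?N. \<Sum>e\<in>{e. e < ?N \<and> e \<notin> {a,b}}. Bt e a b + C1t a b e)"
      by (simp add: sum.distrib[symmetric] case_prod_unfold)
    also have "\<dots> = 0"
    proof -
      have tBC: "Bt e a b + C1t a b e = 0" if "a < b" "e \<noteq> a" "e \<noteq> b" for a b e
        unfolding Bt_def C1t_def by (rule term_BC[OF that])
      show ?thesis by (auto intro!: sum.neutral simp: tBC)
    qed
    finally show ?thesis .
  qed
  have D1: "?SD1 = 0"
  proof -
    have "?SD1 = (\<Sum>(p,q,r)\<in>{(p,q,r). p < q \<and> q < r \<and> r < ?N}. D1t p q r + D1t p r q + D1t q r p)"
      by (rule sum_triples)
    also have "\<dots> = 0"
    proof -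
      have t: "D1t p q r + D1t p r q + D1t q r p = 0" if "p < q" "q < r" "r < ?N" for p q r
        unfolding D1t_def by (rule term_D1[OF that len])
      show ?thesis by (auto intro!: sum.neutral simp: t)
    qed
    finally show ?thesis .
  qed
  have D2: "?SD2 = 0"
  proof (rule sum_quad_cancel)
    fix a b e h assume "a < b" "b < ?N" "e < h" "h < ?N" "e \<notin> {a,b}" "h \<notin> {a,b}" "a < e"
    then show "D2t a b e h + D2t e h a b = 0"
      unfolding D2t_def by (intro term_D2[OF _ _ _ _ _ _ _ _ len]) auto
  qed
  have "CEd phi psi (n+1) ?g xs = (?SA + ?SC0) + (?SB + ?SC1) + ?SD1 + ?SD2"
    unfolding main T1 T2 by (simp add: algebra_simps)
  then show ?thesis using AC BC D1 D2 by simp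
qed

end


lemma additive_neg: "(\<And>x y. h (x + y) = h x + h y) \<Longrightarrow> h (- a) = - h a"
  for h :: "'a::ab_group_add \<Rightarrow> 'b::ab_group_add"
proof -
  assume add: "\<And>x y. h (x + y) = h x + h y"
  have "h 0 = 0" using add[of 0 0] by simp
  then have "h a + h (- a) = 0" using add[of a "- a"] by simp
  then show ?thesis by (metis add.commute add_eq_0_iff)
qed

lemma linear_add: "Vector_Spaces.linear s1 s2 h \<Longrightarrow> h (x + y) = h x + h y"
  by (simp add: linear_iff)

lemma permute_swap01: "permute_list (transpose 0 1) (u # v # r) = v # u # r"
proof (rule nth_equalityI)
  show "length (permute_list (transpose 0 1) (u # v # r)) = length (v # u # r)" by simp
next
  fix i assume "i < length (permute_list (transpose 0 1) (u # v # r))"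
  then have i: "i < length (u # v # r)" by simp
  have p: "transpose 0 1 permutes {..<length (u # v # r)}" by (rule permutes_swap_id) auto
  show "permute_list (transpose 0 1) (u # v # r) ! i = (v # u # r) ! i"
    using permute_list_nth[OF p i] by (cases i; cases "i - 1") (auto simp: transpose_def)
qed

lemma ce_inst:
  assumes L: "lie_algebra sL phi" and M: "lie_module sL phi sB psi" and A: "f \<in> Alt sL sB n"
  shows "ce phi psi f n"
proof -
  have vB: "vector_space sB" using M by (simp add: lie_module_def)
  interpret B: vector_space sB by (rule vB)
  have psil: "Vector_Spaces.linear sB sB (psi x)" for x using M by (simp add: lie_module_def bilinear_map_def)
  have phil2: "Vector_Spaces.linear sL sL (phi x)" for x using L by (simp add: lie_algebra_def bilinear_map_def)
  have phil1: "Vector_Spaces.linear sL sL (\<lambda>a. phi a y)" for y using L by (simp add: lie_algebra_def bilinear_map_def)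
  have add2: "phi x (a + b) = phi x a + phi x b" for x a b using linear_add[OF phil2] .
  have add1: "phi (a + b) y = phi a y + phi b y" for y a b using linear_add[OF phil1[of y]] by simp
  have neg2: "phi x (- a) = - phi x a" for x a by (rule additive_neg) (rule add2)
  have alt: "phi x x = 0" for x using L by (simp add: lie_algebra_def)
  have anti: "phi y x = - phi x y" for x y
  proof -
    have "0 = phi (x + y) (x + y)" by (simp add: alt)
    also have "\<dots> = phi x x + phi x y + (phi y x + phi y y)" by (simp add: add1 add2)
    finally have "phi x y + phi y x = 0" by (simp add: alt)
    then show ?thesis by (metis add.commute add_eq_0_iff)
  qed
  have jac0: "phi x (phi y z) + phi y (phi z x) + phi z (phi x y) = 0" for x y z
    using L by (simp add: lie_algebra_def)
  have jac: "phi (phi x y) z - phi (phi x z) y + phi (phi y z) x = 0" for x y z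
  proof -
    have "phi (phi x y) z - phi (phi x z) y + phi (phi y z) x = - (phi x (phi y z) + phi y (phi z x) + phi z (phi x y))"
      using anti[of "phi x y" z] anti[of "phi x z" y] anti[of "phi y z" x] anti[of z x] neg2[of y "phi z x"]
      by (simp add: algebra_simps)
    then show ?thesis by (simp add: jac0)
  qed
  have ml: "multilinear_on sL sB n f" and sk: "\<And>xs \<sigma>. length xs = n \<Longrightarrow> \<sigma> permutes {..<n} \<Longrightarrow> f (permute_list \<sigma> xs) = sB (of_int (sign \<sigma>)) (f xs)"
    using A by (auto simp: Alt_def)
  show ?thesis
  proof
    show "psi x (a + b) = psi x a + psi x b" for x a b by (rule linear_add[OF psil])
    show "psi (phi x y) b = psi x (psi y b) - psi y (psi x b)" for x y b using M by (simp add: lie_module_def)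
    show "phi y x = - phi x y" for x y by (rule anti)
    show "phi (phi x y) z - phi (phi x z) y + phi (phi y z) x = 0" for x y z by (rule jac)
    show "f ((u + v) # r) = f (u # r) + f (v # r)" if "length r + 1 = n" for r u v
    proof -
      have "Vector_Spaces.linear sL sB (\<lambda>w. f ((u # r)[0 := w]))"
        using ml that unfolding multilinear_on_def by (metis length_Cons add.commute plus_1_eq_Suc zero_less_Suc)
      from linear_add[OF this, of u v] show ?thesis by simp
    qed
    show "f (v # u # r) = - f (u # v # r)" if "length r + 2 = n" for r u v
    proof -
      have p: "transpose 0 1 permutes {..<n}" by (rule permutes_swap_id) (use that in auto)
      have "f (permute_list (transpose 0 1) (u # v # r)) = sB (of_int (sign (transpose (0::nat) 1))) (f (u # v # r))"
        by (rule sk) (use that p in auto)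
      then show ?thesis unfolding permute_swap01 by (simp add: sign_swap_id)
    qed
  qed
qed

lemma sB_pow: "vector_space sB \<Longrightarrow> sB ((-1) ^ k) x = sgnb k x"
proof -
  assume v: "vector_space sB"
  interpret B: vector_space sB by (rule v)
  show ?thesis by (simp add: sgnb_def)
qed

lemma CE_d_eq: "vector_space sB \<Longrightarrow> CE_d sB phi psi n f = CEd phi psi n f"
  by (rule ext) (simp add: CE_d_def CEd_def sB_pow)


definition cyc :: "nat \<Rightarrow> nat \<Rightarrow> nat \<Rightarrow> nat" where
  "cyc a i l = (if l = a then i else if a < l \<and> l \<le> i then l - 1 else l)"

lemma cyc_refl: "cyc a a = id"
  by (rule ext) (simp add: cyc_def)

lemma cyc_Suc: "a \<le> i \<Longrightarrow> cyc a (Suc i) = transpose i (Suc i) \<circ> cyc a i"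
  by (rule ext) (auto simp: cyc_def transpose_def)

lemma cyc_props:
  "a + d < m \<Longrightarrow> cyc a (a + d) permutes {..<m} \<and> permutation (cyc a (a + d)) \<and> sign (cyc a (a + d)) = (-1) ^ d"
proof (induction d)
  case 0
  then show ?case using permutes_id[of "{..<m}"] by (simp add: cyc_refl permutation_id id_def)
next
  case (Suc d)
  then have IH: "cyc a (a + d) permutes {..<m}" "permutation (cyc a (a + d))" "sign (cyc a (a + d)) = (-1) ^ d" by auto
  have e: "cyc a (a + Suc d) = transpose (a + d) (Suc (a + d)) \<circ> cyc a (a + d)"
    using cyc_Suc[of a "a + d"] by simp
  have t: "transpose (a + d) (Suc (a + d)) permutes {..<m}" by (rule permutes_swap_id) (use Suc.prems in auto)
  have p1: "transpose (a + d) (Suc (a + d)) \<circ> cyc a (a + d) permutes {..<m}"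
    by (rule permutes_compose[OF IH(1) t])
  have p2: "permutation (transpose (a + d) (Suc (a + d)) \<circ> cyc a (a + d))"
    by (rule permutation_compose[OF permutation_swap_id IH(2)])
  have p3: "sign (transpose (a + d) (Suc (a + d)) \<circ> cyc a (a + d)) = (-1) ^ Suc d"
    using sign_compose[OF permutation_swap_id[of "a + d" "Suc (a + d)"] IH(2)] IH(3) by (simp add: sign_swap_id)
  show ?case unfolding e using p1 p2 p3 by blast
qed

lemma cyc0: "i < m \<Longrightarrow> cyc 0 i permutes {..<m} \<and> permutation (cyc 0 i) \<and> sign (cyc 0 i) = (-1) ^ i"
  using cyc_props[of 0 i m] by simp

lemma cyc1: "1 \<le> k \<Longrightarrow> k < m \<Longrightarrow> cyc 1 k permutes {..<m} \<and> permutation (cyc 1 k) \<and> sign (cyc 1 k) = (-1) ^ (k - 1)"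
  using cyc_props[of 1 "k - 1" m] by simp

lemma sorted_map_mono:
  fixes \<sigma> :: "nat \<Rightarrow> nat"
  assumes ms: "strict_mono_on {p..<m} \<sigma>"
  shows "sorted_wrt (<) (map \<sigma> [p..<m])"
proof -
  have "\<forall>i j. i < j \<longrightarrow> j < length [p..<m] \<longrightarrow> \<sigma> ([p..<m] ! i) < \<sigma> ([p..<m] ! j)"
    by (auto simp: strict_mono_onD[OF ms])
  then show ?thesis unfolding sorted_wrt_map sorted_wrt_iff_nth_less by simp
qed

lemma unsh_unique:
  fixes \<sigma> \<tau> :: "nat \<Rightarrow> nat"
  assumes s: "\<sigma> permutes {..<m}" and t: "\<tau> permutes {..<m}"
    and ms: "strict_mono_on {p..<m} \<sigma>" and mt: "strict_mono_on {p..<m} \<tau>"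
    and eq: "\<And>l. l < p \<Longrightarrow> \<sigma> l = \<tau> l" and pm: "p \<le> m"
  shows "\<sigma> = \<tau>"
proof -
  have img: "\<sigma> ` {p..<m} = \<tau> ` {p..<m}"
  proof -
    have "\<sigma> ` {..<p} = \<tau> ` {..<p}" using eq by auto
    moreover have ee: "{p..<m} = {..<m} - {..<p}" by auto
    moreover have "\<sigma> ` {p..<m} = \<sigma> ` {..<m} - \<sigma> ` {..<p}"
      unfolding ee by (rule image_set_diff[OF permutes_inj[OF s]])
    moreover have "\<tau> ` {p..<m} = \<tau> ` {..<m} - \<tau> ` {..<p}"
      unfolding ee by (rule image_set_diff[OF permutes_inj[OF t]])
    ultimately show ?thesis using permutes_image[OF s] permutes_image[OF t] by simp
  qed
  have sw: "sorted_wrt (<) (map \<sigma> [p..<m])" "sorted_wrt (<) (map \<tau> [p..<m])"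
    using sorted_map_mono[OF ms] sorted_map_mono[OF mt] by auto
  have "map \<sigma> [p..<m] = map \<tau> [p..<m]"
    by (rule sorted_distinct_set_unique) (use sw img in \<open>auto simp: strict_sorted_iff\<close>)
  then have mid: "\<sigma> l = \<tau> l" if "p \<le> l" "l < m" for l
    using that by (metis atLeastLessThan_iff map_eq_conv set_upt)
  show ?thesis
  proof (rule ext)
    fix l show "\<sigma> l = \<tau> l"
      using eq mid permutes_not_in[OF s, of l] permutes_not_in[OF t, of l] by (cases "l < p"; cases "l < m") auto
  qed
qed

lemma cyc0_unsh: "i < m \<Longrightarrow> cyc 0 i \<in> unshuffles 1 (m - 1)"
  using cyc0[of i m] by (auto simp: unshuffles_def strict_mono_on_def cyc_def)

lemma unsh1_bij: "0 < m \<Longrightarrow> bij_betw (cyc 0) {..<m} (unshuffles 1 (m - 1))"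
proof -
  assume m: "0 < m"
  have inj: "inj_on (cyc 0) {..<m}"
  proof (rule inj_onI)
    fix i j assume "cyc 0 i = cyc 0 j"
    then have "cyc 0 i 0 = cyc 0 j 0" by simp
    then show "i = j" by (simp add: cyc_def)
  qed
  have "cyc 0 ` {..<m} = unshuffles 1 (m - 1)"
  proof
    show "cyc 0 ` {..<m} \<subseteq> unshuffles 1 (m - 1)" using cyc0_unsh by auto
  next
    show "unshuffles 1 (m - 1) \<subseteq> cyc 0 ` {..<m}"
    proof
      fix \<sigma> assume u: "\<sigma> \<in> unshuffles 1 (m - 1)"
      then have s: "\<sigma> permutes {..<m}" and ms: "strict_mono_on {1..<m} \<sigma>"
        using m by (auto simp: unshuffles_def)
      have s0: "\<sigma> 0 < m" using permutes_in_image[OF s, of 0] m by simp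
      have "\<sigma> = cyc 0 (\<sigma> 0)"
      proof (rule unsh_unique[OF s _ ms _ _])
        show "cyc 0 (\<sigma> 0) permutes {..<m}" using cyc0[OF s0] by simp
        show "strict_mono_on {1..<m} (cyc 0 (\<sigma> 0))" using cyc0_unsh[OF s0] m by (simp add: unshuffles_def)
        show "\<sigma> l = cyc 0 (\<sigma> 0) l" if "l < 1" for l using that by (simp add: cyc_def)
        show "1 \<le> m" using m by simp
      qed
      then show "\<sigma> \<in> cyc 0 ` {..<m}" using s0 by auto
    qed
  qed
  then show ?thesis using inj by (simp add: bij_betw_def)
qed

definition cyc2 :: "nat \<Rightarrow> nat \<Rightarrow> nat \<Rightarrow> nat" where
  "cyc2 j k = cyc 0 j \<circ> cyc 1 k"

lemma cyc2_props:
  assumes "j < k" "k < m"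
  shows "cyc2 j k permutes {..<m} \<and> permutation (cyc2 j k) \<and> sign (cyc2 j k) = (-1) ^ j * (-1) ^ (k - 1)"
proof -
  have a: "cyc 0 j permutes {..<m}" "permutation (cyc 0 j)" "sign (cyc 0 j) = (-1) ^ j" using cyc0[of j m] assms by auto
  have b: "cyc 1 k permutes {..<m}" "permutation (cyc 1 k)" "sign (cyc 1 k) = (-1) ^ (k - 1)" using cyc1[of k m] assms by auto
  show ?thesis unfolding cyc2_def
    using permutes_compose[OF b(1) a(1)] permutation_compose[OF a(2) b(2)] sign_compose[OF a(2) b(2)] a(3) b(3) by simp
qed

lemma cyc2_unsh: "j < k \<Longrightarrow> k < m \<Longrightarrow> cyc2 j k \<in> unshuffles 2 (m - 2)"
proof -
  assume h: "j < k" "k < m"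
  then have m2: "2 + (m - 2) = m" by simp
  show ?thesis using cyc2_props[OF h] h unfolding unshuffles_def m2
    by (auto simp: strict_mono_on_def cyc_def cyc2_def)
qed

lemma cyc2_01: "j < k \<Longrightarrow> cyc2 j k 0 = j \<and> cyc2 j k 1 = k"
  by (simp add: cyc2_def cyc_def)

lemma unsh2_bij: "2 \<le> m \<Longrightarrow> bij_betw (\<lambda>(j,k). cyc2 j k) {(j,k). j < k \<and> k < m} (unshuffles 2 (m - 2))"
proof -
  assume True: "2 \<le> m"
  have inj: "inj_on (\<lambda>(j,k). cyc2 j k) {(j,k). j < k \<and> k < m}"
  proof (rule inj_onI, clarify)
    fix j k j' k' assume h: "cyc2 j k = cyc2 j' k'" "j < k" "k < m" "j' < k'" "k' < m"
    have "j = cyc2 j k 0" using cyc2_01[OF h(2)] by simp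
    also have "\<dots> = cyc2 j' k' 0" using h(1) by simp
    also have "\<dots> = j'" using cyc2_01[OF h(4)] by simp
    finally have 1: "j = j'" .
    have "k = cyc2 j k 1" using cyc2_01[OF h(2)] by simp
    also have "\<dots> = cyc2 j' k' 1" using h(1) by simp
    also have "\<dots> = k'" using cyc2_01[OF h(4)] by simp
    finally show "j = j' \<and> k = k'" using 1 by simp
  qed
  have "(\<lambda>(j,k). cyc2 j k) ` {(j,k). j < k \<and> k < m} = unshuffles 2 (m - 2)"
  proof
    show "(\<lambda>(j,k). cyc2 j k) ` {(j,k). j < k \<and> k < m} \<subseteq> unshuffles 2 (m - 2)" using cyc2_unsh by auto
  next
    show "unshuffles 2 (m - 2) \<subseteq> (\<lambda>(j,k). cyc2 j k) ` {(j,k). j < k \<and> k < m}"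
    proof
      fix \<sigma> assume u: "\<sigma> \<in> unshuffles 2 (m - 2)"
      show "\<sigma> \<in> (\<lambda>(j,k). cyc2 j k) ` {(j,k). j < k \<and> k < m}"
      proof -
        have s: "\<sigma> permutes {..<m}" and ms0: "strict_mono_on {..<2} \<sigma>" and ms: "strict_mono_on {2..<m} \<sigma>"
          using u True by (auto simp: unshuffles_def Suc_diff_Suc numeral_2_eq_2)
        have lt: "\<sigma> 0 < \<sigma> 1" using ms0 by (auto simp: strict_mono_on_def)
        have b1: "\<sigma> 1 < m" using permutes_in_image[OF s, of 1] True by simp
        have "\<sigma> = cyc2 (\<sigma> 0) (\<sigma> 1)"
        proof (rule unsh_unique[OF s _ ms _ _])
          show "cyc2 (\<sigma> 0) (\<sigma> 1) permutes {..<m}" using cyc2_props[OF lt b1] by simp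
          have m2: "Suc (Suc (m - 2)) = m" using True by simp
          show "strict_mono_on {2..<m} (cyc2 (\<sigma> 0) (\<sigma> 1))" using cyc2_unsh[OF lt b1] True by (simp add: unshuffles_def m2)
          show "\<sigma> l = cyc2 (\<sigma> 0) (\<sigma> 1) l" if "l < 2" for l
            using that cyc2_01[OF lt] by (cases l) (auto simp: less_2_cases_iff)
          show "2 \<le> m" by (rule True)
        qed
        then show ?thesis using lt b1 by (auto simp: image_iff)
      qed
    qed
  qed
  then show ?thesis using inj by (simp add: bij_betw_def)
qed


lemma map_cyc0:
  assumes ly: "length y = m" and i: "i < m"
  shows "map (\<lambda>l. y ! cyc 0 i l) [1..<m] = nths y (-{i})"
proof (rule nth_equalityI)
  have ln: "length (nths y (-{i})) = m - 1" using len_nths_sub[of "{i}" y] ly i by simp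
  then show "length (map (\<lambda>l. y ! cyc 0 i l) [1..<m]) = length (nths y (-{i}))" by simp
  fix l assume "l < length (map (\<lambda>l. y ! cyc 0 i l) [1..<m])"
  then have l: "l < m - 1" by simp
  let ?c = "cyc 0 i (Suc l)"
  have cdef: "?c = (if Suc l \<le> i then l else Suc l)" by (simp add: cyc_def)
  have ci: "?c \<noteq> i" "?c < m" using cdef l by auto
  have "rk {i} ?c = l" using rk_single[of i ?c] cdef by (auto split: if_splits)
  then have "nths y (-{i}) ! l = y ! ?c" using nths_nth_rk[of ?c y "{i}"] ci ly by simp
  then show "map (\<lambda>l. y ! cyc 0 i l) [1..<m] ! l = nths y (-{i}) ! l" using l by simp
qed

lemma map_cyc2:
  assumes ly: "length y = m" and jk: "j < k" "k < m"
  shows "map (\<lambda>l. y ! cyc2 j k l) [2..<m] = nths y (-{j,k})"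
proof (rule nth_equalityI)
  have "card {j,k} = 2" using jk by simp
  then have ln: "length (nths y (-{j,k})) = m - 2" using len_nths_sub[of "{j,k}" y] ly jk by simp
  then show "length (map (\<lambda>l. y ! cyc2 j k l) [2..<m]) = length (nths y (-{j,k}))" by simp
  fix l assume "l < length (map (\<lambda>l. y ! cyc2 j k l) [2..<m])"
  then have l: "l < m - 2" by simp
  let ?c = "cyc2 j k (2 + l)"
  have cdef: "?c = (if 2 + l \<le> k then (if 1 + l \<le> j then l else 1 + l) else 2 + l)"
    using jk by (simp add: cyc2_def cyc_def)
  have ci: "?c \<noteq> j" "?c \<noteq> k" "?c < m" using cdef l jk by auto
  have "rk {j,k} ?c = l" using rk_pair[of j k ?c] cdef jk by (auto split: if_splits)
  then have "nths y (-{j,k}) ! l = y ! ?c" using nths_nth_rk[of ?c y "{j,k}"] ci ly by simp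
  then show "map (\<lambda>l. y ! cyc2 j k l) [2..<m] ! l = nths y (-{j,k}) ! l" using l by simp
qed

lemma iter_cop_len: "t \<in> set (iter_cop Delta m c) \<Longrightarrow> length t = Suc m"
  by (induction m arbitrary: t) auto


declare upt_Suc[simp del] iter_cop.simps(2)[simp del]

lemma negsl: "- sum_list (map h xs) = sum_list (map (\<lambda>t. - h t) xs)" for h :: "'x \<Rightarrow> 'b::ab_group_add"
  by (induction xs) simp_all

lemma L1: "- sgnb k (sum_list (map h xs)) = sum_list (map (\<lambda>t. - sgnb k (h t)) xs)" for h :: "'x \<Rightarrow> 'b::ab_group_add"
  by (induction xs) (simp_all add: sgnb_add)

lemma L2: "(\<Sum>p\<in>A. sum_list (map (h p) xs)) = sum_list (map (\<lambda>t. \<Sum>p\<in>A. h p t) xs)" for h :: "'z \<Rightarrow> 'x \<Rightarrow> 'b::ab_group_add"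
  by (induction xs) (simp_all add: sum.distrib)

lemma TD_reduce:
  assumes vB: "vector_space sB" and lg: "length gs = n + 2"
  shows "TD_delta sB Delta phi psi (n+1) G gs c =
    sum_list (map (\<lambda>t. CEd phi psi (n+1) G (map (\<lambda>i. (gs!i) (t!i)) [0..<n+2])) (iter_cop Delta (n+1) c))"
proof -
  interpret B: vector_space sB by (rule vB)
  let ?T = "iter_cop Delta (n+1) c"
  let ?y = "\<lambda>t. map (\<lambda>i. (gs!i) (t!i)) [0..<n+2]"
  have ly: "length (?y t) = n + 2" for t by simp
  have sgsl: "sgnb k (sum_list xs) = sum_list (map (sgnb k) xs)" for k and xs :: "'b list"
    by (induction xs) (simp_all add: sgnb_add)
  have swap: "(\<Sum>i\<in>A. sum_list (map (h i) xs)) = sum_list (map (\<lambda>t. \<Sum>i\<in>A. h i t) xs)"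
    for A :: "'z set" and h :: "'z \<Rightarrow> 'c list \<Rightarrow> 'b" and xs
    by (induction xs) (simp_all add: sum.distrib)
  have yel: "(permute_list \<sigma> gs ! l) (t ! \<sigma> l) = ?y t ! \<sigma> l"
    if s: "\<sigma> permutes {..<n+2}" and l: "l < n + 2" for \<sigma> t l
  proof -
    have "\<sigma> l < n + 2" using permutes_in_image[OF s, of l] l by simp
    then have "?y t ! \<sigma> l = (gs ! \<sigma> l) (t ! \<sigma> l)" by (simp del: upt_Suc)
    then show ?thesis using permute_list_nth[of \<sigma> gs l] s l lg by simp
  qed
  have psi_part: "PsiF_sup Delta psi G (n+2) \<sigma> (act \<sigma> gs) c
      = sum_list (map (\<lambda>t. psi (?y t ! \<sigma> 0) (G (map (\<lambda>l. ?y t ! \<sigma> l) [1..<n+2]))) ?T)"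
    if s: "\<sigma> permutes {..<n+2}" for \<sigma>
  proof -
    have mc: "map (\<lambda>i. (permute_list \<sigma> gs ! i) (t ! \<sigma> i)) [1..<n+2] = map (\<lambda>l. ?y t ! \<sigma> l) [1..<n+2]" for t
      by (rule map_cong) (auto simp: yel[OF s])
    have m0: "(permute_list \<sigma> gs ! 0) (t ! \<sigma> 0) = ?y t ! \<sigma> 0" for t by (rule yel[OF s]) simp
    show ?thesis unfolding PsiF_sup_def act_def mc m0 by simp
  qed
  have phi_part: "FPhi_sup Delta phi G (n+2) \<sigma> (act \<sigma> gs) c
      = sum_list (map (\<lambda>t. G (phi (?y t ! \<sigma> 0) (?y t ! \<sigma> 1) # map (\<lambda>l. ?y t ! \<sigma> l) [2..<n+2])) ?T)"
    if s: "\<sigma> permutes {..<n+2}" for \<sigma>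
  proof -
    have mc: "map (\<lambda>i. (permute_list \<sigma> gs ! i) (t ! \<sigma> i)) [2..<n+2] = map (\<lambda>l. ?y t ! \<sigma> l) [2..<n+2]" for t
      by (rule map_cong) (auto simp: yel[OF s])
    have m0: "(permute_list \<sigma> gs ! 0) (t ! \<sigma> 0) = ?y t ! \<sigma> 0" for t by (rule yel[OF s]) simp
    have m1: "(permute_list \<sigma> gs ! 1) (t ! \<sigma> 1) = ?y t ! \<sigma> 1" for t by (rule yel[OF s]) simp
    show ?thesis unfolding FPhi_sup_def act_def mc m0 m1 by simp
  qed
  have P1: "(\<Sum>\<sigma>\<in>unshuffles 1 (n+1). sB (of_int (sign \<sigma>)) (PsiF_sup Delta psi G (n+2) \<sigma> (act \<sigma> gs) c))
     = sum_list (map (\<lambda>t. \<Sum>i<n+2. sgnb i (psi (?y t ! i) (G (nths (?y t) (-{i}))))) ?T)"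
  proof -
    have u: "unshuffles 1 (n+1) = unshuffles 1 (n + 2 - 1)" by simp
    have "(\<Sum>\<sigma>\<in>unshuffles 1 (n+1). sB (of_int (sign \<sigma>)) (PsiF_sup Delta psi G (n+2) \<sigma> (act \<sigma> gs) c))
      = (\<Sum>i<n+2. sB (of_int (sign (cyc 0 i))) (PsiF_sup Delta psi G (n+2) (cyc 0 i) (act (cyc 0 i) gs) c))"
      unfolding u by (rule sum.reindex_bij_betw[symmetric, OF unsh1_bij]) simp
    also have "\<dots> = (\<Sum>i<n+2. sgnb i (sum_list (map (\<lambda>t. psi (?y t ! i) (G (nths (?y t) (-{i})))) ?T)))"
    proof (rule sum.cong[OF refl])
      fix i assume i: "i \<in> {..<n+2}"
      then have c: "cyc 0 i permutes {..<n+2}" "sign (cyc 0 i) = (-1) ^ i" using cyc0[of i "n+2"] by auto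
      have "cyc 0 i 0 = i" by (simp add: cyc_def)
      moreover have "map (\<lambda>l. ?y t ! cyc 0 i l) [1..<n+2] = nths (?y t) (-{i})" for t
        by (rule map_cyc0) (use i in auto)
      ultimately show "sB (of_int (sign (cyc 0 i))) (PsiF_sup Delta psi G (n+2) (cyc 0 i) (act (cyc 0 i) gs) c)
          = sgnb i (sum_list (map (\<lambda>t. psi (?y t ! i) (G (nths (?y t) (-{i})))) ?T))"
        unfolding psi_part[OF c(1)] c(2) by (simp add: sB_pow[OF vB])
    qed
    also have "\<dots> = sum_list (map (\<lambda>t. \<Sum>i<n+2. sgnb i (psi (?y t ! i) (G (nths (?y t) (-{i}))))) ?T)"
      by (simp add: sgsl swap o_def)
    finally show ?thesis .
  qed
  have P2: "(\<Sum>\<sigma>\<in>unshuffles 2 n. sB (of_int (sign \<sigma>)) (FPhi_sup Delta phi G (n+2) \<sigma> (act \<sigma> gs) c))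
     = sum_list (map (\<lambda>t. \<Sum>(j,k)\<in>{(j,k). j < k \<and> k < n+2}. - sgnb (j + k) (G (phi (?y t ! j) (?y t ! k) # nths (?y t) (-{j,k})))) ?T)"
  proof -
    have u: "unshuffles 2 n = unshuffles 2 (n + 2 - 2)" by simp
    have "(\<Sum>\<sigma>\<in>unshuffles 2 n. sB (of_int (sign \<sigma>)) (FPhi_sup Delta phi G (n+2) \<sigma> (act \<sigma> gs) c))
      = (\<Sum>(j,k)\<in>{(j,k). j < k \<and> k < n+2}. sB (of_int (sign (cyc2 j k))) (FPhi_sup Delta phi G (n+2) (cyc2 j k) (act (cyc2 j k) gs) c))"
      unfolding u by (subst sum.reindex_bij_betw[symmetric, OF unsh2_bij]) (simp_all add: case_prod_unfold)
    also have "\<dots> = (\<Sum>(j,k)\<in>{(j,k). j < k \<and> k < n+2}. - sgnb (j + k) (sum_list (map (\<lambda>t. G (phi (?y t ! j) (?y t ! k) # nths (?y t) (-{j,k}))) ?T)))"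
    proof (rule sum.cong[OF refl], clarify)
      fix j k assume jk: "j < k" "k < n + 2"
      have c: "cyc2 j k permutes {..<n+2}" "sign (cyc2 j k) = (-1) ^ j * (-1) ^ (k - 1)" using cyc2_props[OF jk] by auto
      have m: "map (\<lambda>l. ?y t ! cyc2 j k l) [2..<n+2] = nths (?y t) (-{j,k})" for t
        by (rule map_cyc2) (use jk in auto)
      have s: "sB (of_int (sign (cyc2 j k))) x = - sgnb (j + k) x" for x
      proof -
        have "sB (of_int (sign (cyc2 j k))) x = sB ((-1) ^ (j + (k - 1))) x" unfolding c(2) by (simp add: power_add)
        also have "\<dots> = sgnb (j + (k - 1)) x" by (rule sB_pow[OF vB])
        also have "\<dots> = - sgnb (j + k) x" by (rule sgnb_opp) (use jk in presburger)
        finally show ?thesis .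
      qed
      show "sB (of_int (sign (cyc2 j k))) (FPhi_sup Delta phi G (n+2) (cyc2 j k) (act (cyc2 j k) gs) c)
          = - sgnb (j + k) (sum_list (map (\<lambda>t. G (phi (?y t ! j) (?y t ! k) # nths (?y t) (-{j,k}))) ?T))"
        unfolding phi_part[OF c(1)] s m using cyc2_01[OF jk(1)] by simp
    qed
    also have "\<dots> = sum_list (map (\<lambda>t. \<Sum>(j,k)\<in>{(j,k). j < k \<and> k < n+2}. - sgnb (j + k) (G (phi (?y t ! j) (?y t ! k) # nths (?y t) (-{j,k})))) ?T)"
    proof -
      have "(\<Sum>(j,k)\<in>{(j,k). j < k \<and> k < n+2}. - sgnb (j + k) (sum_list (map (\<lambda>t. G (phi (?y t ! j) (?y t ! k) # nths (?y t) (-{j,k}))) ?T)))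
        = (\<Sum>p\<in>{(j,k). j < k \<and> k < n+2}. sum_list (map (\<lambda>t. (\<lambda>(j,k). - sgnb (j + k) (G (phi (?y t ! j) (?y t ! k) # nths (?y t) (-{j,k})))) p) ?T))"
        by (rule sum.cong[OF refl]) (clarify, rule L1)
      also have "\<dots> = sum_list (map (\<lambda>t. \<Sum>p\<in>{(j,k). j < k \<and> k < n+2}. (\<lambda>(j,k). - sgnb (j + k) (G (phi (?y t ! j) (?y t ! k) # nths (?y t) (-{j,k})))) p) ?T)"
        by (rule L2)
      finally show ?thesis .
    qed
    finally show ?thesis .
  qed
  have "TD_delta sB Delta phi psi (n+1) G gs c =
     (\<Sum>\<sigma>\<in>unshuffles 1 (n+1). sB (of_int (sign \<sigma>)) (PsiF_sup Delta psi G (n+2) \<sigma> (act \<sigma> gs) c))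
   - (\<Sum>\<sigma>\<in>unshuffles 2 n. sB (of_int (sign \<sigma>)) (FPhi_sup Delta phi G (n+2) \<sigma> (act \<sigma> gs) c))"
    by (simp add: TD_delta_def)
  also have "\<dots> = sum_list (map (\<lambda>t. CEd phi psi (n+1) G (?y t)) ?T)"
    unfolding P1 P2 sum_list_subtractf[symmetric]
    by (rule arg_cong[where f=sum_list], rule map_cong[OF refl]) (simp add: CEd_def sum_negf case_prod_unfold)
  finally show ?thesis .
qed

theorem corollary3:
  fixes sC :: "'k::field \<Rightarrow> 'c::ab_group_add \<Rightarrow> 'c"
    and sL :: "'k \<Rightarrow> 'l::ab_group_add \<Rightarrow> 'l"
    and sB :: "'k \<Rightarrow> 'b::ab_group_add \<Rightarrow> 'b"
    and Delta :: "'c \<Rightarrow> ('c \<times> 'c) list"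
    and phi :: "'l \<Rightarrow> 'l \<Rightarrow> 'l"
    and psi :: "'l \<Rightarrow> 'b \<Rightarrow> 'b"
    and n :: nat
    and f :: "'l list \<Rightarrow> 'b"
  assumes "coassoc_coalgebra sC Delta"
    and "lie_algebra sL phi"
    and "lie_module sL phi sB psi"
    and "f \<in> Alt sL sB n"
  shows "\<forall>gs c. length gs = n + 2 \<longrightarrow> (\<forall>g\<in>set gs. Vector_Spaces.linear sC sL g) \<longrightarrow>
           TD_delta sB Delta phi psi (n + 1) (CE_d sB phi psi n f) gs c = 0"
proof (intro allI impI)
  fix gs :: "('c \<Rightarrow> 'l) list" and c :: 'c
  assume lg: "length gs = n + 2"
  have vB: "vector_space sB" using assms(3) by (simp add: lie_module_def)
  interpret ce phi psi f n by (rule ce_inst[OF assms(2) assms(3) assms(4)])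
  have "TD_delta sB Delta phi psi (n + 1) (CE_d sB phi psi n f) gs c
     = sum_list (map (\<lambda>t. CEd phi psi (n+1) (CEd phi psi n f) (map (\<lambda>i. (gs!i) (t!i)) [0..<n+2])) (iter_cop Delta (n+1) c))"
    unfolding CE_d_eq[OF vB] by (rule TD_reduce[OF vB lg])
  also have "\<dots> = sum_list (map (\<lambda>t. 0) (iter_cop Delta (n+1) c))"
    by (rule arg_cong[where f=sum_list], rule map_cong[OF refl], rule dd0) simp
  also have "\<dots> = 0" by (induction "iter_cop Delta (n+1) c") simp_all
  finally show "TD_delta sB Delta phi psi (n + 1) (CE_d sB phi psi n f) gs c = 0" .
qed


end
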